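(* Let $\{a_k\}\subset\mathbb{C}\setminus\{0\}$ be a sequence without finite limit points (each point with finite multiplicity) such that the limit $\lim_{R\to\infty}\sum_{|a_k|<R} a_k^{-1}$ exists, $n(0,t)=O(t)$ as $t\to\infty$, and $n(0,t+1)-n(0,t)=o(t)$ as $t\to\infty$. Then $$g(z)=\lim_{R\to\infty}\prod_{|a_k|<R}(1-z/a_k)$$ is a well-defined entire function of finite exponential type, and for all $z\in\mathbb{C}$ $$\log|g(z)|=\int_0^\infty [n(0,t)-n(z,t)]\,t^{-1}\,dt.$$ Moreover, if $z_0$ is a point of the sequence $\{a_k\}$ with multiplicity $l=n(z_0,0)>0$, then $$\log\left|\frac{g^{(l)}(z_0)}{l!}\right|=\int_1^\infty\frac{n(0,t)-n(z_0,t)}{t}\,dt+\int_0^1\frac{n(0,t)-n(z_0,t)+l}{t}\,dt.$$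
   Context: For $c\in\mathbb{C}$ and $t\ge 0$, $n(c,t)=\mathrm{card}\{a_k:\,|a_k-c|\le t\}$, counted with multiplicity. An entire function has finite exponential type if $|g(z)|\le Ae^{B|z|}$ for some constants $A,B$. *)

theory Defs
  imports "HOL-Complex_Analysis.Complex_Analysis" "HOL-Library.Landau_Symbols"
begin

text \<open>The sequence is given as a map a from an index set K (a set of naturals;
  finite or infinite) to the complex numbers; multiplicities are repetitions.\<close>

definition cnt :: "nat set \<Rightarrow> (nat \<Rightarrow> complex) \<Rightarrow> complex \<Rightarrow> real \<Rightarrow> real" where
  "cnt K a c t = real (card {k\<in>K. cmod (a k - c) \<le> t})"

definition partial_prod :: "nat set \<Rightarrow> (nat \<Rightarrow> complex) \<Rightarrow> real \<Rightarrow> complex \<Rightarrow> complex" where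
  "partial_prod K a R z = (\<Prod>k\<in>{k\<in>K. cmod (a k) < R}. 1 - z / a k)"

end

theory Submission
  imports Defs
begin

lemma has_integral_Ici_lim:
  fixes f :: "real \<Rightarrow> real"
  assumes int: "\<And>T. T \<ge> c \<Longrightarrow> f integrable_on {c..T}"
    and lim: "((\<lambda>T. integral {c..T} f) \<longlongrightarrow> I) at_top"
  shows "(f has_integral I) {c..}"
proof -
  have nb: "\<not> (\<exists>a b. {c..} = cbox a b)"
  proof
    assume "\<exists>a b. {c..} = cbox a b"
    then obtain a b where e: "{c..} = cbox a (b::real)" by blast
    have "max c b + 1 \<in> {c..}" by simp
    then show False using e by (auto simp: cbox_interval)
  qed
  show ?thesis
  proof (subst has_integral_alt, simp only: nb if_False, intro allI impI)
    fix e :: real assume "e > 0"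
    from lim[THEN tendstoD, OF this] obtain T0 where
      T0: "\<And>T. T \<ge> T0 \<Longrightarrow> dist (integral {c..T} f) I < e"
      by (auto simp: eventually_at_top_linorder)
    have "\<forall>a b. ball 0 (max T0 \<bar>c\<bar> + 1) \<subseteq> cbox a b \<longrightarrow> (\<exists>z. ((\<lambda>x. if x \<in> {c..} then f x else 0) has_integral z) (cbox a b) \<and> norm (z - I) < e)"
    proof (intro allI impI)
      fix a b :: real assume sub: "ball 0 (max T0 \<bar>c\<bar> + 1) \<subseteq> cbox a b"
      have m1: "- (max T0 \<bar>c\<bar> + 1/2) \<in> ball 0 (max T0 \<bar>c\<bar> + 1)" by auto
      have m2: "(max T0 \<bar>c\<bar> + 1/2) \<in> ball 0 (max T0 \<bar>c\<bar> + 1)" by auto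
      have "- (max T0 \<bar>c\<bar> + 1/2) \<in> cbox a b" "(max T0 \<bar>c\<bar> + 1/2) \<in> cbox a b"
        using subsetD[OF sub m1] subsetD[OF sub m2] by auto
      then have ab: "a \<le> - (max T0 \<bar>c\<bar> + 1/2)" "b \<ge> max T0 \<bar>c\<bar> + 1/2"
        by (auto simp: cbox_interval)
      have "(f has_integral integral {c..b} f) (cbox c b)"
        using int[of b] ab by (simp add: cbox_interval integrable_integral)
      then have "((\<lambda>x. if x \<in> cbox c b then f x else 0) has_integral integral {c..b} f) (cbox a b)"
        by (rule has_integral_restrict_closed_subinterval) (use ab in \<open>auto simp: cbox_interval\<close>)
      then have "((\<lambda>x. if x \<in> {c..} then f x else 0) has_integral integral {c..b} f) (cbox a b)"
        by (rule has_integral_eq[rotated]) (auto simp: cbox_interval)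
      moreover have "norm (integral {c..b} f - I) < e" using T0[of b] ab by (simp add: dist_norm)
      ultimately show "\<exists>z. ((\<lambda>x. if x \<in> {c..} then f x else 0) has_integral z) (cbox a b) \<and> norm (z - I) < e"
        by blast
    qed
    then show "\<exists>B>0. \<forall>a b. ball 0 B \<subseteq> cbox a b \<longrightarrow> (\<exists>z. ((\<lambda>x. if x \<in> {c..} then f x else 0) has_integral z) (cbox a b) \<and> norm (z - I) < e)"
      by (intro exI[of _ "max T0 \<bar>c\<bar> + 1"]) auto
  qed
qed

lemma has_integral_step:
  fixes f f' :: "real \<Rightarrow> real"
  assumes "\<alpha> \<le> d" "d \<le> T" "\<And>t. d \<le> t \<Longrightarrow> t \<le> T \<Longrightarrow> (f has_real_derivative f' t) (at t)"
  shows "((\<lambda>t. if d \<le> t then f' t else 0) has_integral (f T - f d)) {\<alpha>..T}"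
proof -
  have "(f' has_integral (f T - f d)) {d..T}"
    using assms
    by (intro fundamental_theorem_of_calculus)
       (auto intro: has_field_derivative_at_within simp flip: has_real_derivative_iff_has_vector_derivative)
  then have "((\<lambda>t. if t \<in> cbox d T then f' t else 0) has_integral (f T - f d)) (cbox \<alpha> T)"
    by (intro has_integral_restrict_closed_subinterval) (use assms in \<open>auto simp: cbox_interval\<close>)
  then show ?thesis unfolding cbox_interval
    by (rule has_integral_eq[rotated]) auto
qed

lemma has_integral_count:
  fixes F :: "nat set" and d :: "nat \<Rightarrow> real" and f f' :: "real \<Rightarrow> real"
  assumes "finite F" "\<And>k. k\<in>F \<Longrightarrow> \<alpha> \<le> d k"
    and der: "\<And>t k. k\<in>F \<Longrightarrow> d k \<le> t \<Longrightarrow> t \<le> T \<Longrightarrow> (f has_real_derivative f' t) (at t)"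
  shows "((\<lambda>t. real (card {k\<in>F. d k \<le> t}) * f' t) has_integral
            (\<Sum>k\<in>{k\<in>F. d k \<le> T}. f T - f (d k))) {\<alpha>..T}"
proof -
  have each: "((\<lambda>t. if d k \<le> t then f' t else 0) has_integral (if d k \<le> T then f T - f (d k) else 0)) {\<alpha>..T}"
    if k: "k \<in> F" for k
  proof (cases "d k \<le> T")
    case True
    then show ?thesis using has_integral_step[of \<alpha> "d k" T f f'] assms k by auto
  next
    case False
    have "((\<lambda>t. 0) has_integral 0) {\<alpha>..T}" by simp
    then have "((\<lambda>t. if d k \<le> t then f' t else 0) has_integral 0) {\<alpha>..T}"
      by (rule has_integral_eq[rotated]) (use False in auto)
    then show ?thesis using False by simp
  qed
  have "((\<lambda>t. \<Sum>k\<in>F. if d k \<le> t then f' t else 0) has_integral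
          (\<Sum>k\<in>F. if d k \<le> T then f T - f (d k) else 0)) {\<alpha>..T}"
    by (rule has_integral_sum) (use assms each in auto)
  moreover have "(\<Sum>k\<in>F. if d k \<le> t then f' t else 0) = real (card {k\<in>F. d k \<le> t}) * f' t" for t
    using assms(1) by (simp add: sum.If_cases Int_def)
  moreover have "(\<Sum>k\<in>F. if d k \<le> T then f T - f (d k) else 0) = (\<Sum>k\<in>{k\<in>F. d k \<le> T}. f T - f (d k))"
    using assms(1) by (simp add: sum.If_cases Int_def)
  ultimately show ?thesis by simp
qed

lemma cnt_set_finite:
  assumes fin: "\<And>R. finite {k\<in>K. cmod (a k) \<le> R}"
  shows "finite {k\<in>K. cmod (a k - c) \<le> t}"
proof -
  have "{k\<in>K. cmod (a k - c) \<le> t} \<subseteq> {k\<in>K. cmod (a k) \<le> t + cmod c}"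
  proof safe
    fix k assume "k \<in> K" "cmod (a k - c) \<le> t"
    moreover have "cmod (a k) \<le> cmod (a k - c) + cmod c" by (metis norm_triangle_sub add.commute)
    ultimately show "cmod (a k) \<le> t + cmod c" by linarith
  qed
  then show ?thesis using fin finite_subset by blast
qed

lemma cnt_mono:
  assumes fin: "\<And>R. finite {k\<in>K. cmod (a k) \<le> R}" and "s \<le> t"
  shows "cnt K a c s \<le> cnt K a c t"
  unfolding cnt_def using cnt_set_finite[OF fin, of c t] assms(2)
  by (intro of_nat_mono card_mono) auto

lemma cnt_nonneg: "cnt K a c t \<ge> 0"
  by (simp add: cnt_def)

lemma cnt_window:
  assumes fin: "\<And>R. finite {k\<in>K. cmod (a k) \<le> R}" and "s \<le> t"
  shows "real (card {k\<in>K. s < cmod (a k - c) \<and> cmod (a k - c) \<le> t}) = cnt K a c t - cnt K a c s"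
proof -
  have "{k\<in>K. cmod (a k - c) \<le> t} = {k\<in>K. cmod (a k - c) \<le> s} \<union> {k\<in>K. s < cmod (a k - c) \<and> cmod (a k - c) \<le> t}"
    using assms(2) by auto
  moreover have "card ({k\<in>K. cmod (a k - c) \<le> s} \<union> {k\<in>K. s < cmod (a k - c) \<and> cmod (a k - c) \<le> t})
     = card {k\<in>K. cmod (a k - c) \<le> s} + card {k\<in>K. s < cmod (a k - c) \<and> cmod (a k - c) \<le> t}"
    by (rule card_Un_disjoint)
       (auto intro: finite_subset[OF _ cnt_set_finite[OF fin, of c t]] finite_subset[OF _ cnt_set_finite[OF fin, of c s]])
  ultimately show ?thesis unfolding cnt_def by simp
qed

lemma cnt_log_integral:
  assumes fin: "\<And>R. finite {k\<in>K. cmod (a k) \<le> R}"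
    and nz: "\<And>k. k \<in> K \<Longrightarrow> a k \<noteq> c"
  shows "((\<lambda>t. cnt K a c t / t) has_integral
           (\<Sum>k\<in>{k\<in>K. cmod (a k - c) \<le> T}. ln T - ln (cmod (a k - c)))) {0..T}"
proof -
  define F where "F = {k\<in>K. cmod (a k - c) \<le> T}"
  have fF: "finite F" unfolding F_def by (rule cnt_set_finite[OF fin])
  have "((\<lambda>t. real (card {k\<in>F. cmod (a k - c) \<le> t}) * (1 / t)) has_integral
            (\<Sum>k\<in>{k\<in>F. cmod (a k - c) \<le> T}. ln T - ln (cmod (a k - c)))) {0..T}"
  proof (rule has_integral_count[OF fF])
    fix t k assume k: "k \<in> F" and "cmod (a k - c) \<le> t" "t \<le> T"
    moreover have "cmod (a k - c) > 0" using nz k by (auto simp: F_def)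
    ultimately have "t > 0" by linarith
    then show "(ln has_real_derivative 1 / t) (at t)"
      by (auto intro!: derivative_eq_intros)
  qed simp
  moreover have "{k\<in>F. cmod (a k - c) \<le> T} = {k\<in>K. cmod (a k - c) \<le> T}" by (auto simp: F_def)
  ultimately have "((\<lambda>t. real (card {k\<in>F. cmod (a k - c) \<le> t}) * (1 / t)) has_integral
            (\<Sum>k\<in>{k\<in>K. cmod (a k - c) \<le> T}. ln T - ln (cmod (a k - c)))) {0..T}" by simp
  then show ?thesis
  proof (rule has_integral_eq[rotated])
    fix t assume "t \<in> {0..T}"
    then have "{k\<in>F. cmod (a k - c) \<le> t} = {k\<in>K. cmod (a k - c) \<le> t}" by (auto simp: F_def)
    then show "real (card {k\<in>F. cmod (a k - c) \<le> t}) * (1 / t) = cnt K a c t / t"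
      by (simp add: cnt_def)
  qed
qed

lemma cnt_zero_near0:
  assumes fin: "\<And>R. finite {k\<in>K. cmod (a k) \<le> R}"
    and nz: "\<And>k. k \<in> K \<Longrightarrow> a k \<noteq> c"
  shows "\<exists>\<delta>>0. \<forall>t<\<delta>. cnt K a c t = 0"
proof -
  define F where "F = {k\<in>K. cmod (a k - c) \<le> 1}"
  have fF: "finite F" unfolding F_def by (rule cnt_set_finite[OF fin])
  define \<delta> where "\<delta> = Min (insert 1 ((\<lambda>k. cmod (a k - c)) ` F))"
  have "\<delta> > 0" unfolding \<delta>_def using fF nz by (subst Min_gr_iff) (auto simp: F_def)
  moreover have "cnt K a c t = 0" if "t < \<delta>" for t
  proof -
    have e: "{k\<in>K. cmod (a k - c) \<le> t} = {}"
    proof safe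
      fix k assume k: "k \<in> K" "cmod (a k - c) \<le> t"
      have "\<delta> \<le> 1" unfolding \<delta>_def using fF by (intro Min_le) auto
      then have "k \<in> F" using k that by (auto simp: F_def)
      then have "\<delta> \<le> cmod (a k - c)" unfolding \<delta>_def using fF by (intro Min_le) auto
      then show "k \<in> {}" using k that by linarith
    qed
    show ?thesis unfolding cnt_def e by simp
  qed
  ultimately show ?thesis by blast
qed

lemma cnt_linear_bound:
  assumes fin: "\<And>R. finite {k\<in>K. cmod (a k) \<le> R}"
    and nz: "\<And>k. k \<in> K \<Longrightarrow> a k \<noteq> 0"
    and growth: "(\<lambda>t. cnt K a 0 t) \<in> O[at_top](\<lambda>t. t)"
  shows "\<exists>C\<ge>0. \<forall>t\<ge>0. cnt K a 0 t \<le> C * t"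
proof -
  from growth obtain c where c: "c > 0" "eventually (\<lambda>t. norm (cnt K a 0 t) \<le> c * norm t) at_top"
    by (rule landau_o.bigE)
  then obtain t0 where t0': "\<And>t. t \<ge> t0 \<Longrightarrow> \<bar>cnt K a 0 t\<bar> \<le> c * \<bar>t\<bar>"
    by (auto simp: eventually_at_top_linorder)
  have t0: "cnt K a 0 t \<le> c * \<bar>t\<bar>" if "t \<ge> t0" for t
    using t0'[OF that] abs_ge_self[of "cnt K a 0 t"] by linarith
  obtain \<delta> where \<delta>: "\<delta> > 0" "\<And>t. t < \<delta> \<Longrightarrow> cnt K a 0 t = 0"
    using cnt_zero_near0[OF fin nz] by blast
  define C where "C = max c (cnt K a 0 t0 / \<delta>)"
  have "C \<ge> 0" using c by (simp add: C_def)
  moreover have "cnt K a 0 t \<le> C * t" if "t \<ge> 0" for t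
  proof (cases "t < \<delta>")
    case True then show ?thesis using \<delta> that \<open>C \<ge> 0\<close> by simp
  next
    case False
    show ?thesis
    proof (cases "t \<ge> t0")
      case True
      then have "cnt K a 0 t \<le> c * \<bar>t\<bar>" by (rule t0)
      then have "cnt K a 0 t \<le> c * t" using that by simp
      also have "\<dots> \<le> C * t" using that by (intro mult_right_mono) (auto simp: C_def)
      finally show ?thesis .
    next
      case False': False
      have "cnt K a 0 t \<le> cnt K a 0 t0" using False' by (intro cnt_mono[OF fin]) simp
      also have "\<dots> = (cnt K a 0 t0 / \<delta>) * \<delta>" using \<delta> by simp
      also have "\<dots> \<le> C * t" using False \<delta> cnt_nonneg[of K a 0 t0] \<open>C \<ge> 0\<close>
        by (intro mult_mono) (auto simp: C_def)
      finally show ?thesis .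
    qed
  qed
  ultimately show ?thesis by blast
qed

lemma window_small:
  assumes fin: "\<And>R. finite {k\<in>K. cmod (a k) \<le> R}"
    and incr: "(\<lambda>t. cnt K a 0 (t + 1) - cnt K a 0 t) \<in> o[at_top](\<lambda>t. t)"
    and r: "r \<ge> 0" and \<epsilon>: "\<epsilon> > 0"
  shows "eventually (\<lambda>T. cnt K a 0 (T + r) - cnt K a 0 (T - r) \<le> \<epsilon> * T) at_top"
proof -
  define m where "m = nat \<lceil>2 * r\<rceil>"
  have m: "2 * r \<le> real m" unfolding m_def by linarith
  define \<epsilon>' where "\<epsilon>' = \<epsilon> / (2 * (real m + 1))"
  have \<epsilon>': "\<epsilon>' > 0" using \<epsilon> by (simp add: \<epsilon>'_def)
  from landau_o.smallD[OF incr \<epsilon>'] obtain t0 where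
    t0: "\<And>t. t \<ge> t0 \<Longrightarrow> norm (cnt K a 0 (t + 1) - cnt K a 0 t) \<le> \<epsilon>' * norm t"
    by (auto simp: eventually_at_top_linorder)
  show ?thesis
  proof (rule eventually_at_top_linorderI[of "max (max (t0 + r) r) (real m + 1)"])
    fix T assume T: "T \<ge> max (max (t0 + r) r) (real m + 1)"
    define s where "s = T - r"
    have tel: "cnt K a 0 (s + real m) - cnt K a 0 s = (\<Sum>j<m. cnt K a 0 (s + real j + 1) - cnt K a 0 (s + real j))"
    proof (induction m)
      case (Suc m) then show ?case by (simp add: algebra_simps)
    qed simp
    have "(\<Sum>j<m. cnt K a 0 (s + real j + 1) - cnt K a 0 (s + real j)) \<le> (\<Sum>j<m. \<epsilon>' * (T + real m))"
    proof (rule sum_mono)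
      fix j assume j: "j \<in> {..<m}"
      have "s + real j \<ge> t0" using T r by (simp add: s_def)
      then have "cnt K a 0 (s + real j + 1) - cnt K a 0 (s + real j) \<le> \<epsilon>' * \<bar>s + real j\<bar>"
        using t0[of "s + real j"] by (simp add: add.assoc)
      also have "\<dots> \<le> \<epsilon>' * (T + real m)"
        using T r j \<epsilon>' by (intro mult_left_mono) (auto simp: s_def)
      finally show "cnt K a 0 (s + real j + 1) - cnt K a 0 (s + real j) \<le> \<epsilon>' * (T + real m)" .
    qed
    also have "\<dots> = real m * \<epsilon>' * (T + real m)" by simp
    also have "\<dots> \<le> real m * \<epsilon>' * (2 * T)"
      using T \<epsilon>' by (intro mult_left_mono) auto
    also have "\<dots> \<le> \<epsilon> * T"
    proof -
      have "real m * \<epsilon>' * 2 \<le> \<epsilon>" using \<epsilon> by (simp add: \<epsilon>'_def field_simps)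
      moreover have "T \<ge> 0" using T by simp
      ultimately have "(real m * \<epsilon>' * 2) * T \<le> \<epsilon> * T" by (rule mult_right_mono)
      then show ?thesis by (simp add: algebra_simps)
    qed
    finally have "cnt K a 0 (s + real m) - cnt K a 0 s \<le> \<epsilon> * T" using tel by simp
    moreover have "cnt K a 0 (T + r) \<le> cnt K a 0 (s + real m)"
      using m by (intro cnt_mono[OF fin]) (simp add: s_def)
    ultimately show "cnt K a 0 (T + r) - cnt K a 0 (T - r) \<le> \<epsilon> * T" by (simp add: s_def)
  qed
qed

locale zset =
  fixes K :: "nat set" and a :: "nat \<Rightarrow> complex" and C :: real and L :: complex
  assumes nonzero: "\<And>k. k \<in> K \<Longrightarrow> a k \<noteq> 0"
    and fin: "\<And>R. finite {k\<in>K. cmod (a k) \<le> R}"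
    and sigma_lim: "((\<lambda>R::real. \<Sum>k\<in>{k\<in>K. cmod (a k) < R}. 1 / a k) \<longlongrightarrow> L) at_top"
    and C_nonneg: "C \<ge> 0"
    and lin: "\<And>t. t \<ge> 0 \<Longrightarrow> cnt K a 0 t \<le> C * t"
begin

lemma fin_lt: "finite {k\<in>K. cmod (a k) < R}"
  by (rule finite_subset[OF _ fin[of R]]) auto

lemma fin_ann: "finite {k\<in>K. R \<le> cmod (a k) \<and> cmod (a k) < R'}"
  by (rule finite_subset[OF _ fin[of R']]) auto

lemma tail_sq:
  assumes R: "0 < R" "R \<le> R'"
  shows "(\<Sum>k\<in>{k\<in>K. R \<le> cmod (a k) \<and> cmod (a k) < R'}. 1 / cmod (a k) ^ 2) \<le> 2 * C / R"
proof -
  define F where "F = {k\<in>K. R \<le> cmod (a k) \<and> cmod (a k) < R'}"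
  have fF: "finite F" unfolding F_def by (rule fin_ann)
  have hi: "((\<lambda>t. real (card {k\<in>F. cmod (a k) \<le> t}) * (2 / t ^ 3)) has_integral
       (\<Sum>k\<in>{k\<in>F. cmod (a k) \<le> R'}. (- 1 / R' ^ 2) - (- 1 / cmod (a k) ^ 2))) {R..R'}"
  proof (rule has_integral_count[OF fF])
    fix t k assume "k \<in> F" "cmod (a k) \<le> t" "t \<le> R'"
    then have t: "t > 0" using R by (auto simp: F_def)
    show "((\<lambda>t. - 1 / t ^ 2) has_real_derivative 2 / t ^ 3) (at t)"
      using t by (auto intro!: derivative_eq_intros simp: field_simps power2_eq_square power3_eq_cube)
  qed (auto simp: F_def)
  have hb: "((\<lambda>t. 2 * C / t ^ 2) has_integral ((- 2 * C / R') - (- 2 * C / R))) {R..R'}"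
  proof (rule fundamental_theorem_of_calculus)
    show "R \<le> R'" by fact
    fix t assume "t \<in> {R..R'}"
    then have t: "t > 0" using R by auto
    show "((\<lambda>t. - 2 * C / t) has_vector_derivative 2 * C / t ^ 2) (at t within {R..R'})"
      unfolding has_real_derivative_iff_has_vector_derivative[symmetric]
      using t by (auto intro!: derivative_eq_intros simp: field_simps power2_eq_square)
  qed
  have le: "(\<Sum>k\<in>{k\<in>F. cmod (a k) \<le> R'}. (- 1 / R' ^ 2) - (- 1 / cmod (a k) ^ 2)) \<le> (- 2 * C / R') - (- 2 * C / R)"
  proof (rule has_integral_le[OF hi hb])
    fix t assume "t \<in> {R..R'}"
    then have t: "t > 0" "t \<ge> R" using R by auto
    have "real (card {k\<in>F. cmod (a k) \<le> t}) \<le> cnt K a 0 t"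
      unfolding cnt_def using cnt_set_finite[OF fin, of 0 t]
      by (intro of_nat_mono card_mono) (auto simp: F_def)
    also have "\<dots> \<le> C * t" using lin t by simp
    finally have "real (card {k\<in>F. cmod (a k) \<le> t}) * (2 / t ^ 3) \<le> C * t * (2 / t ^ 3)"
      using t by (intro mult_right_mono) auto
    also have "\<dots> = 2 * C / t ^ 2" using t by (simp add: field_simps power2_eq_square power3_eq_cube)
    finally show "real (card {k\<in>F. cmod (a k) \<le> t}) * (2 / t ^ 3) \<le> 2 * C / t ^ 2" .
  qed
  have eqF: "{k\<in>F. cmod (a k) \<le> R'} = F" by (auto simp: F_def)
  have "(\<Sum>k\<in>F. (- 1 / R' ^ 2) - (- 1 / cmod (a k) ^ 2)) = (\<Sum>k\<in>F. 1 / cmod (a k) ^ 2) - real (card F) / R' ^ 2"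
    by (simp add: sum_subtractf)
  with le eqF have s: "(\<Sum>k\<in>F. 1 / cmod (a k) ^ 2) \<le> real (card F) / R' ^ 2 + 2 * C / R - 2 * C / R'"
    by simp
  have "real (card F) \<le> cnt K a 0 R'"
    unfolding cnt_def using cnt_set_finite[OF fin, of 0 R']
    by (intro of_nat_mono card_mono) (auto simp: F_def)
  also have "\<dots> \<le> C * R'" using lin R by simp
  finally have "real (card F) / R' ^ 2 \<le> C * R' / R' ^ 2"
    using R by (intro divide_right_mono) auto
  also have "\<dots> = C / R'" using R by (simp add: power2_eq_square)
  also have "\<dots> \<le> 2 * C / R'" using R C_nonneg by (simp add: divide_right_mono)
  finally show ?thesis using s unfolding F_def by linarith
qed

lemma sigma_split:
  assumes "R \<le> R'"
  shows "(\<Sum>k\<in>{k\<in>K. cmod (a k) < R'}. 1 / a k) = (\<Sum>k\<in>{k\<in>K. cmod (a k) < R}. 1 / a k) + (\<Sum>k\<in>{k\<in>K. R \<le> cmod (a k) \<and> cmod (a k) < R'}. 1 / a k)"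
proof -
  have "{k\<in>K. cmod (a k) < R'} = {k\<in>K. cmod (a k) < R} \<union> {k\<in>K. R \<le> cmod (a k) \<and> cmod (a k) < R'}"
    using assms by auto
  then show ?thesis
    by (simp add: sum.union_disjoint[OF fin_lt fin_ann] disjoint_iff)
qed

lemma prod_split:
  assumes "R \<le> R'"
  shows "(\<Prod>k\<in>{k\<in>K. cmod (a k) < R'}. f k) = (\<Prod>k\<in>{k\<in>K. cmod (a k) < R}. f k) * (\<Prod>k\<in>{k\<in>K. R \<le> cmod (a k) \<and> cmod (a k) < R'}. f k)"
proof -
  have "{k\<in>K. cmod (a k) < R'} = {k\<in>K. cmod (a k) < R} \<union> {k\<in>K. R \<le> cmod (a k) \<and> cmod (a k) < R'}"
    using assms by auto
  then show ?thesis
    by (simp add: prod.union_disjoint[OF fin_lt fin_ann] disjoint_iff)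
qed

lemma sigma_cauchy:
  assumes "\<delta> > 0"
  shows "\<exists>R0. \<forall>R R'. R0 \<le> R \<longrightarrow> R \<le> R' \<longrightarrow> cmod (\<Sum>k\<in>{k\<in>K. R \<le> cmod (a k) \<and> cmod (a k) < R'}. 1 / a k) \<le> \<delta>"
proof -
  have "\<delta> / 2 > 0" using assms by simp
  from sigma_lim[THEN tendstoD, OF this] obtain R0 where
    R0: "\<And>R. R \<ge> R0 \<Longrightarrow> dist (\<Sum>k\<in>{k\<in>K. cmod (a k) < R}. 1 / a k) L < \<delta> / 2"
    by (auto simp: eventually_at_top_linorder)
  show ?thesis
  proof (intro exI[of _ R0] allI impI)
    fix R R' assume "R0 \<le> R" "R \<le> R'"
    then have d1: "dist (\<Sum>k\<in>{k\<in>K. cmod (a k) < R}. 1 / a k) L < \<delta> / 2"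
      and d2: "dist (\<Sum>k\<in>{k\<in>K. cmod (a k) < R'}. 1 / a k) L < \<delta> / 2" using R0 by auto
    have "cmod (\<Sum>k\<in>{k\<in>K. R \<le> cmod (a k) \<and> cmod (a k) < R'}. 1 / a k)
        = dist (\<Sum>k\<in>{k\<in>K. cmod (a k) < R'}. 1 / a k) (\<Sum>k\<in>{k\<in>K. cmod (a k) < R}. 1 / a k)"
      using sigma_split[OF \<open>R \<le> R'\<close>] by (simp add: dist_norm)
    also have "\<dots> \<le> dist (\<Sum>k\<in>{k\<in>K. cmod (a k) < R'}. 1 / a k) L + dist (\<Sum>k\<in>{k\<in>K. cmod (a k) < R}. 1 / a k) L"
      by (rule dist_triangle2)
    finally show "cmod (\<Sum>k\<in>{k\<in>K. R \<le> cmod (a k) \<and> cmod (a k) < R'}. 1 / a k) \<le> \<delta>"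
      using d1 d2 by linarith
  qed
qed

lemma sigma_bounded: "\<exists>M\<ge>0. \<forall>R. cmod (\<Sum>k\<in>{k\<in>K. cmod (a k) < R}. 1 / a k) \<le> M"
proof -
  from sigma_lim[THEN tendstoD, of 1] obtain R0 where
    R0: "\<And>R. R \<ge> R0 \<Longrightarrow> dist (\<Sum>k\<in>{k\<in>K. cmod (a k) < R}. 1 / a k) L < 1"
    by (auto simp: eventually_at_top_linorder)
  define M where "M = cmod L + 1 + (\<Sum>k\<in>{k\<in>K. cmod (a k) < R0}. cmod (1 / a k))"
  have M0: "(\<Sum>k\<in>{k\<in>K. cmod (a k) < R0}. cmod (1 / a k)) \<ge> 0" by (rule sum_nonneg) auto
  have "cmod (\<Sum>k\<in>{k\<in>K. cmod (a k) < R}. 1 / a k) \<le> M" for R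
  proof (cases "R \<ge> R0")
    case True
    have "cmod (\<Sum>k\<in>{k\<in>K. cmod (a k) < R}. 1 / a k) \<le> cmod L + dist (\<Sum>k\<in>{k\<in>K. cmod (a k) < R}. 1 / a k) L"
      using norm_triangle_sub[of "\<Sum>k\<in>{k\<in>K. cmod (a k) < R}. 1 / a k" L] by (simp add: dist_norm)
    then show ?thesis using R0[OF True] M0 by (simp add: M_def)
  next
    case False
    have "cmod (\<Sum>k\<in>{k\<in>K. cmod (a k) < R}. 1 / a k) \<le> (\<Sum>k\<in>{k\<in>K. cmod (a k) < R}. cmod (1 / a k))"
      by (rule norm_sum)
    also have "\<dots> \<le> (\<Sum>k\<in>{k\<in>K. cmod (a k) < R0}. cmod (1 / a k))"
      using False by (intro sum_mono2[OF fin_lt]) auto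
    finally have "cmod (\<Sum>k\<in>{k\<in>K. cmod (a k) < R}. 1 / a k) \<le> (\<Sum>k\<in>{k\<in>K. cmod (a k) < R0}. cmod (1 / a k))" .
    then show ?thesis unfolding M_def using norm_ge_zero[of L] by linarith
  qed
  moreover have "M \<ge> 0" using M0 by (simp add: M_def)
  ultimately show ?thesis by blast
qed

lemma prod_exp_form:
  assumes F: "finite F" "F \<subseteq> K" and big: "\<And>k. k \<in> F \<Longrightarrow> 2 * cmod z \<le> cmod (a k)"
  shows "\<exists>u. (\<Prod>k\<in>F. 1 - z / a k) = exp u \<and>
     cmod u \<le> cmod z * cmod (\<Sum>k\<in>F. 1 / a k) + 2 * cmod z ^ 2 * (\<Sum>k\<in>F. 1 / cmod (a k) ^ 2)"
proof -
  have w: "cmod (z / a k) \<le> 1/2" if "k \<in> F" for k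
  proof -
    have "a k \<noteq> 0" using that F nonzero by auto
    then show ?thesis using big[OF that] by (simp add: norm_divide field_simps)
  qed
  define u where "u = (\<Sum>k\<in>F. Ln (1 - z / a k))"
  have "exp u = (\<Prod>k\<in>F. exp (Ln (1 - z / a k)))" unfolding u_def by (rule exp_sum[OF F(1)])
  also have "\<dots> = (\<Prod>k\<in>F. 1 - z / a k)"
  proof (rule prod.cong[OF refl])
    fix k assume k: "k \<in> F"
    have "1 - z / a k \<noteq> 0"
    proof
      assume "1 - z / a k = 0"
      then have "z / a k = 1" by simp
      then show False using w[OF k] by simp
    qed
    then show "exp (Ln (1 - z / a k)) = 1 - z / a k" by simp
  qed
  finally have e: "(\<Prod>k\<in>F. 1 - z / a k) = exp u" ..
  have each: "cmod (Ln (1 - z / a k) + z / a k) \<le> 2 * (cmod z ^ 2 * (1 / cmod (a k) ^ 2))" if k: "k \<in> F" for k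
  proof -
    have "cmod (Ln (1 + (- (z / a k))) - (- (z / a k))) \<le> cmod (- (z / a k)) ^ 2 / (1 - cmod (- (z / a k)))"
      by (rule Ln_approx_linear) (use w[OF k] in simp)
    also have "\<dots> \<le> cmod (z / a k) ^ 2 / (1/2)"
      unfolding norm_minus_cancel using w[OF k] by (intro divide_left_mono) auto
    also have "\<dots> = 2 * (cmod z ^ 2 * (1 / cmod (a k) ^ 2))"
      by (simp add: norm_divide power_divide)
    finally show ?thesis by simp
  qed
  have "u = - (z * (\<Sum>k\<in>F. 1 / a k)) + (\<Sum>k\<in>F. Ln (1 - z / a k) + z / a k)"
    by (simp add: u_def sum.distrib sum_distrib_left)
  then have t: "cmod u \<le> cmod (z * (\<Sum>k\<in>F. 1 / a k)) + cmod (\<Sum>k\<in>F. Ln (1 - z / a k) + z / a k)"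
    using norm_triangle_ineq[of "- (z * (\<Sum>k\<in>F. 1 / a k))" "\<Sum>k\<in>F. Ln (1 - z / a k) + z / a k"]
    by (simp only: norm_minus_cancel)
  have "cmod (\<Sum>k\<in>F. Ln (1 - z / a k) + z / a k) \<le> (\<Sum>k\<in>F. 2 * (cmod z ^ 2 * (1 / cmod (a k) ^ 2)))"
    by (rule order_trans[OF norm_sum sum_mono]) (rule each)
  also have "(\<Sum>k\<in>F. 2 * (cmod z ^ 2 * (1 / cmod (a k) ^ 2))) = 2 * cmod z ^ 2 * (\<Sum>k\<in>F. 1 / cmod (a k) ^ 2)"
    by (simp add: sum_distrib_left mult.assoc)
  finally have b: "cmod u \<le> cmod (z * (\<Sum>k\<in>F. 1 / a k)) + 2 * cmod z ^ 2 * (\<Sum>k\<in>F. 1 / cmod (a k) ^ 2)"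
    using t by linarith
  show ?thesis
    by (rule exI[of _ u]) (use e b in \<open>simp add: norm_mult\<close>)
qed

end

context zset
begin

abbreviation Ann where "Ann R R' \<equiv> {k\<in>K. R \<le> cmod (a k) \<and> cmod (a k) < R'}"

lemma P_split:
  assumes "R \<le> R'"
  shows "partial_prod K a R' z = partial_prod K a R z * (\<Prod>k\<in>Ann R R'. 1 - z / a k)"
  unfolding partial_prod_def by (rule prod_split[OF assms])

lemma Q_est:
  assumes \<rho>: "\<rho> \<ge> 0" and \<epsilon>: "\<epsilon> > 0"
  shows "\<exists>R0>0. \<forall>R R' z. R0 \<le> R \<longrightarrow> R \<le> R' \<longrightarrow> cmod z \<le> \<rho> \<longrightarrow>
            cmod ((\<Prod>k\<in>Ann R R'. 1 - z / a k) - 1) \<le> \<epsilon>"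
proof -
  define \<eta> where "\<eta> = min (1/2) (\<epsilon>/2)"
  have \<eta>: "\<eta> > 0" "\<eta> \<le> 1/2" "\<eta> \<le> \<epsilon>/2" using \<epsilon> by (auto simp: \<eta>_def)
  define \<delta> where "\<delta> = \<eta> / (2 * (\<rho> + 1))"
  have \<delta>: "\<delta> > 0" using \<eta> \<rho> by (simp add: \<delta>_def)
  obtain R1 where R1: "\<And>R R'. R1 \<le> R \<Longrightarrow> R \<le> R' \<Longrightarrow> cmod (\<Sum>k\<in>Ann R R'. 1 / a k) \<le> \<delta>"
    using sigma_cauchy[OF \<delta>] by blast
  define R0 where "R0 = max (max R1 (2 * \<rho> + 1)) (8 * \<rho>^2 * C / \<eta> + 1)"
  have R0: "R0 > 0" unfolding R0_def using \<rho> by (simp add: less_max_iff_disj)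
  show ?thesis
  proof (intro exI[of _ R0] conjI allI impI R0)
    fix R R' z assume R: "R0 \<le> R" and RR': "R \<le> R'" and z: "cmod z \<le> \<rho>"
    have Rpos: "R > 0" using R R0 by simp
    have big: "2 * cmod z \<le> cmod (a k)" if "k \<in> Ann R R'" for k
      using that z R by (auto simp: R0_def)
    obtain u where u: "(\<Prod>k\<in>Ann R R'. 1 - z / a k) = exp u"
      "cmod u \<le> cmod z * cmod (\<Sum>k\<in>Ann R R'. 1 / a k) + 2 * cmod z ^ 2 * (\<Sum>k\<in>Ann R R'. 1 / cmod (a k) ^ 2)"
      using prod_exp_form[OF fin_ann _ big] by blast
    have s1: "cmod (\<Sum>k\<in>Ann R R'. 1 / a k) \<le> \<delta>" using R RR' by (intro R1) (auto simp: R0_def)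
    have s2: "(\<Sum>k\<in>Ann R R'. 1 / cmod (a k) ^ 2) \<le> 2 * C / R" by (rule tail_sq[OF Rpos RR'])
    have t1: "cmod z * cmod (\<Sum>k\<in>Ann R R'. 1 / a k) \<le> \<rho> * \<delta>"
      using z s1 \<rho> by (intro mult_mono) auto
    have "\<rho> * \<delta> \<le> \<eta> / 2"
    proof -
      have "\<rho> * \<delta> = (\<rho> / (\<rho> + 1)) * (\<eta> / 2)" using \<rho> by (simp add: \<delta>_def field_simps)
      also have "\<dots> \<le> 1 * (\<eta> / 2)" using \<rho> \<eta> by (intro mult_right_mono) auto
      finally show ?thesis by simp
    qed
    have t2: "2 * cmod z ^ 2 * (\<Sum>k\<in>Ann R R'. 1 / cmod (a k) ^ 2) \<le> 2 * \<rho> ^ 2 * (2 * C / R)"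
      using z s2 by (intro mult_mono power_mono) (auto intro: sum_nonneg)
    have "2 * \<rho> ^ 2 * (2 * C / R) \<le> \<eta> / 2"
    proof -
      have "8 * \<rho>^2 * C / \<eta> \<le> R" using R by (simp add: R0_def)
      then have "8 * \<rho>^2 * C \<le> R * \<eta>" using \<eta> by (simp add: field_simps)
      then show ?thesis using Rpos by (simp add: field_simps)
    qed
    have un: "cmod u \<le> \<eta>" using u(2) t1 t2 \<open>\<rho> * \<delta> \<le> \<eta> / 2\<close> \<open>2 * \<rho> ^ 2 * (2 * C / R) \<le> \<eta> / 2\<close> by linarith
    have "cmod (exp u - 1) \<le> 3 / 2 * cmod u"
      by (rule norm_exp_bounds(2)) (use un \<eta> in linarith)
    also have "\<dots> \<le> \<epsilon>" using un \<eta> by linarith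
    finally show "cmod ((\<Prod>k\<in>Ann R R'. 1 - z / a k) - 1) \<le> \<epsilon>" using u(1) by simp
  qed
qed

lemma P_bound:
  assumes "cmod z \<le> \<rho>"
  shows "cmod (partial_prod K a R z) \<le> (\<Prod>k\<in>{k\<in>K. cmod (a k) < R}. 1 + \<rho> / cmod (a k))"
proof -
  have "cmod (partial_prod K a R z) \<le> (\<Prod>k\<in>{k\<in>K. cmod (a k) < R}. cmod (1 - z / a k))"
    unfolding partial_prod_def by (rule norm_prod_le)
  also have "\<dots> \<le> (\<Prod>k\<in>{k\<in>K. cmod (a k) < R}. 1 + \<rho> / cmod (a k))"
  proof (rule prod_mono, safe)
    fix k assume k: "k \<in> K" "cmod (a k) < R"
    have "cmod (1 - z / a k) \<le> 1 + cmod (z / a k)" by (metis norm_one norm_triangle_ineq4)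
    also have "\<dots> \<le> 1 + \<rho> / cmod (a k)" using assms by (simp add: norm_divide divide_right_mono)
    finally show "cmod (1 - z / a k) \<le> 1 + \<rho> / cmod (a k)" .
  qed simp
  finally show ?thesis .
qed

lemma U_est:
  assumes \<rho>: "\<rho> \<ge> 0" and \<epsilon>: "\<epsilon> > 0"
  shows "\<exists>R0. \<forall>R R' z. R0 \<le> R \<longrightarrow> R \<le> R' \<longrightarrow> cmod z \<le> \<rho> \<longrightarrow>
            cmod (partial_prod K a R' z - partial_prod K a R z) \<le> \<epsilon>"
proof -
  obtain R1 where R1: "\<And>R R' z. R1 \<le> R \<Longrightarrow> R \<le> R' \<Longrightarrow> cmod z \<le> \<rho> \<Longrightarrow>
            cmod ((\<Prod>k\<in>Ann R R'. 1 - z / a k) - 1) \<le> 1"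
    using Q_est[OF \<rho>, of 1] by auto
  define B where "B = (\<Prod>k\<in>{k\<in>K. cmod (a k) < R1}. 1 + \<rho> / cmod (a k))"
  have B0: "B \<ge> 0" unfolding B_def using \<rho> by (intro prod_nonneg) auto
  have PB: "cmod (partial_prod K a R z) \<le> 2 * B" if "R1 \<le> R" "cmod z \<le> \<rho>" for R z
  proof -
    have "cmod (\<Prod>k\<in>Ann R1 R. 1 - z / a k) \<le> 2"
      using R1[of R1 R z] that norm_triangle_ineq2[of "\<Prod>k\<in>Ann R1 R. 1 - z / a k" 1] by simp
    moreover have "cmod (partial_prod K a R1 z) \<le> B" unfolding B_def by (rule P_bound) (use that in simp)
    ultimately have "cmod (partial_prod K a R1 z) * cmod (\<Prod>k\<in>Ann R1 R. 1 - z / a k) \<le> B * 2"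
      using B0 by (intro mult_mono) auto
    then show ?thesis using P_split[OF that(1), of z] by (simp add: norm_mult mult.commute)
  qed
  have "\<epsilon> / (2 * B + 1) > 0" using \<epsilon> B0 by simp
  from Q_est[OF \<rho> this] obtain R2 where R2: "\<And>R R' z. R2 \<le> R \<Longrightarrow> R \<le> R' \<Longrightarrow> cmod z \<le> \<rho> \<Longrightarrow>
            cmod ((\<Prod>k\<in>Ann R R'. 1 - z / a k) - 1) \<le> \<epsilon> / (2 * B + 1)" by auto
  show ?thesis
  proof (intro exI[of _ "max R1 R2"] allI impI)
    fix R R' z assume R: "max R1 R2 \<le> R" and RR': "R \<le> R'" and z: "cmod z \<le> \<rho>"
    have "partial_prod K a R' z - partial_prod K a R z = partial_prod K a R z * ((\<Prod>k\<in>Ann R R'. 1 - z / a k) - 1)"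
      using P_split[OF RR', of z] by (simp add: algebra_simps)
    then have "cmod (partial_prod K a R' z - partial_prod K a R z) = cmod (partial_prod K a R z) * cmod ((\<Prod>k\<in>Ann R R'. 1 - z / a k) - 1)"
      by (simp add: norm_mult)
    also have "\<dots> \<le> (2 * B) * (\<epsilon> / (2 * B + 1))"
      using PB[of R z] R2[of R R' z] R z RR' B0 by (intro mult_mono) auto
    also have "\<dots> \<le> \<epsilon>" using B0 \<epsilon> by (simp add: field_simps)
    finally show "cmod (partial_prod K a R' z - partial_prod K a R z) \<le> \<epsilon>" .
  qed
qed

definition gfun :: "complex \<Rightarrow> complex" where
  "gfun z = lim (\<lambda>n::nat. partial_prod K a (real n) z)"

lemma g_approx:
  assumes \<rho>: "\<rho> \<ge> 0" and \<epsilon>: "\<epsilon> > 0"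
  shows "\<exists>R0. \<forall>R z. R0 \<le> R \<longrightarrow> cmod z \<le> \<rho> \<longrightarrow> cmod (partial_prod K a R z - gfun z) \<le> \<epsilon>"
proof -
  obtain R0 where R0: "\<And>R R' z. R0 \<le> R \<Longrightarrow> R \<le> R' \<Longrightarrow> cmod z \<le> \<rho> \<Longrightarrow>
            cmod (partial_prod K a R' z - partial_prod K a R z) \<le> \<epsilon>"
    using U_est[OF \<rho> \<epsilon>] by blast
  have conv: "(\<lambda>n::nat. partial_prod K a (real n) z) \<longlonglongrightarrow> gfun z" for z
  proof -
    have "Cauchy (\<lambda>n::nat. partial_prod K a (real n) z)"
    proof (rule metric_CauchyI)
      fix e :: real assume e: "e > 0"
      obtain R0' where R0': "\<And>R R' w. R0' \<le> R \<Longrightarrow> R \<le> R' \<Longrightarrow> cmod w \<le> cmod z \<Longrightarrow>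
            cmod (partial_prod K a R' w - partial_prod K a R w) \<le> e / 2"
        using U_est[of "cmod z" "e/2"] e by auto
      show "\<exists>M. \<forall>m\<ge>M. \<forall>n\<ge>M. dist (partial_prod K a (real m) z) (partial_prod K a (real n) z) < e"
      proof (intro exI[of _ "nat \<lceil>R0'\<rceil>"] allI impI)
        fix m n :: nat assume m: "m \<ge> nat \<lceil>R0'\<rceil>" and n: "n \<ge> nat \<lceil>R0'\<rceil>"
        then have mR: "real m \<ge> R0'" and nR: "real n \<ge> R0'" by linarith+
        show "dist (partial_prod K a (real m) z) (partial_prod K a (real n) z) < e"
        proof (cases "m \<le> n")
          case True
          then have "cmod (partial_prod K a (real n) z - partial_prod K a (real m) z) \<le> e / 2"
            using R0'[OF mR] by simp
          then show ?thesis using e by (simp add: dist_norm norm_minus_commute)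
        next
          case False
          then have "cmod (partial_prod K a (real m) z - partial_prod K a (real n) z) \<le> e / 2"
            using R0'[OF nR] by simp
          then show ?thesis using e by (simp add: dist_norm)
        qed
      qed
    qed
    then show ?thesis unfolding gfun_def by (simp add: Cauchy_convergent_iff convergent_LIMSEQ_iff)
  qed
  show ?thesis
  proof (intro exI[of _ R0] allI impI)
    fix R z assume R: "R0 \<le> R" and z: "cmod z \<le> \<rho>"
    have "((\<lambda>n. cmod (partial_prod K a R z - partial_prod K a (real n) z)) \<longlongrightarrow> cmod (partial_prod K a R z - gfun z)) sequentially"
      by (intro tendsto_intros conv)
    moreover have "eventually (\<lambda>n. cmod (partial_prod K a R z - partial_prod K a (real n) z) \<le> \<epsilon>) sequentially"
    proof (rule eventually_sequentiallyI[of "nat \<lceil>R\<rceil>"])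
      fix n assume "nat \<lceil>R\<rceil> \<le> n"
      then have "R \<le> real n" by linarith
      then show "cmod (partial_prod K a R z - partial_prod K a (real n) z) \<le> \<epsilon>"
        using R0[OF R _ z, of "real n"] by (simp add: norm_minus_commute)
    qed
    ultimately show "cmod (partial_prod K a R z - gfun z) \<le> \<epsilon>"
      by (rule tendsto_upperbound) simp
  qed
qed

lemma g_tendsto: "((\<lambda>R. partial_prod K a R z) \<longlongrightarrow> gfun z) at_top"
proof (rule tendstoI)
  fix e :: real assume "e > 0"
  then obtain R0 where R0: "\<And>R w. R0 \<le> R \<Longrightarrow> cmod w \<le> cmod z \<Longrightarrow> cmod (partial_prod K a R w - gfun w) \<le> e / 2"
    using g_approx[of "cmod z" "e/2"] by auto
  show "eventually (\<lambda>R. dist (partial_prod K a R z) (gfun z) < e) at_top"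
    using R0 \<open>e > 0\<close> by (intro eventually_at_top_linorderI[of R0]) (force simp: dist_norm)
qed

lemma P_holo: "partial_prod K a R holomorphic_on S"
proof -
  have "(\<lambda>z. \<Prod>k\<in>{k\<in>K. cmod (a k) < R}. 1 - z / a k) holomorphic_on S"
    using nonzero by (intro holomorphic_intros) auto
  then show ?thesis by (simp add: partial_prod_def[abs_def])
qed

lemma P_cont: "continuous_on S (partial_prod K a R)"
  by (rule holomorphic_on_imp_continuous_on[OF P_holo])

lemma g_holo: "gfun holomorphic_on UNIV"
proof -
  have "gfun holomorphic_on ball 0 \<rho>" if \<rho>: "\<rho> \<ge> 0" for \<rho>
  proof -
    have "uniform_limit (cball 0 \<rho>) (\<lambda>R. partial_prod K a R) gfun at_top"
    proof (rule uniform_limitI)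
      fix e :: real assume "e > 0"
      then obtain R0 where R0: "\<And>R w. R0 \<le> R \<Longrightarrow> cmod w \<le> \<rho> \<Longrightarrow> cmod (partial_prod K a R w - gfun w) \<le> e / 2"
        using g_approx[OF \<rho>, of "e/2"] by auto
      show "\<forall>\<^sub>F R in at_top. \<forall>x\<in>cball 0 \<rho>. dist (partial_prod K a R x) (gfun x) < e"
        using R0 \<open>e > 0\<close> by (intro eventually_at_top_linorderI[of R0]) (force simp: dist_norm)
    qed
    moreover have "eventually (\<lambda>R. continuous_on (cball 0 \<rho>) (partial_prod K a R) \<and> partial_prod K a R holomorphic_on ball 0 \<rho>) at_top"
      by (simp add: P_cont P_holo)
    ultimately show ?thesis
      by (metis holomorphic_uniform_limit trivial_limit_at_top_linorder)
  qed
  then show ?thesis unfolding holomorphic_on_def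
  proof -
    have "gfun field_differentiable at z" for z
      using holomorphic_on_imp_differentiable_at[OF \<open>\<And>\<rho>. 0 \<le> \<rho> \<Longrightarrow> gfun holomorphic_on ball 0 \<rho>\<close>[of "cmod z + 1"]] by simp
    then show "\<forall>x\<in>UNIV. gfun field_differentiable at x within UNIV" by simp
  qed
qed

lemma g_nonzero:
  assumes "z \<notin> a ` K"
  shows "gfun z \<noteq> 0"
proof -
  obtain R1 where R1: "\<And>R R' w. R1 \<le> R \<Longrightarrow> R \<le> R' \<Longrightarrow> cmod w \<le> cmod z \<Longrightarrow>
            cmod ((\<Prod>k\<in>Ann R R'. 1 - w / a k) - 1) \<le> 1/2"
    using Q_est[of "cmod z" "1/2"] by auto
  have nz: "partial_prod K a R1 z \<noteq> 0"
    unfolding partial_prod_def using fin_lt assms nonzero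
    by (subst prod_zero_iff) (auto simp: field_simps)
  have "eventually (\<lambda>R. cmod (partial_prod K a R1 z) / 2 \<le> cmod (partial_prod K a R z)) at_top"
  proof (rule eventually_at_top_linorderI[of R1])
    fix R assume R: "R \<ge> R1"
    have "cmod (\<Prod>k\<in>Ann R1 R. 1 - z / a k) \<ge> 1/2"
      using R1[of R1 R z] R norm_triangle_ineq3[of "\<Prod>k\<in>Ann R1 R. 1 - z / a k" 1] by simp
    then have "cmod (partial_prod K a R1 z) * (1/2) \<le> cmod (partial_prod K a R1 z) * cmod (\<Prod>k\<in>Ann R1 R. 1 - z / a k)"
      by (intro mult_left_mono) auto
    then show "cmod (partial_prod K a R1 z) / 2 \<le> cmod (partial_prod K a R z)"
      using P_split[OF R, of z] by (simp add: norm_mult)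
  qed
  then have "cmod (partial_prod K a R1 z) / 2 \<le> cmod (gfun z)"
    by (intro tendsto_lowerbound[OF tendsto_norm[OF g_tendsto]]) simp_all
  then show ?thesis using nz by auto
qed

lemma g_zero:
  assumes "z \<in> a ` K"
  shows "gfun z = 0"
proof -
  have "eventually (\<lambda>R. partial_prod K a R z = 0) at_top"
  proof (rule eventually_at_top_linorderI[of "cmod z + 1"])
    fix R assume R: "R \<ge> cmod z + 1"
    from assms obtain k where k: "k \<in> K" "z = a k" by auto
    then have "k \<in> {k\<in>K. cmod (a k) < R}" using R by auto
    moreover have "1 - z / a k = 0" using k nonzero by simp
    ultimately show "partial_prod K a R z = 0"
      unfolding partial_prod_def using fin_lt by (subst prod_zero_iff) auto
  qed
  then have "((\<lambda>R. partial_prod K a R z) \<longlongrightarrow> 0) at_top" by (rule tendsto_eventually)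
  then show ?thesis using g_tendsto[of z] by (metis tendsto_unique trivial_limit_at_top_linorder)
qed

end

context zset
begin

lemma g_at_0: "gfun 0 = 1"
proof -
  have "((\<lambda>R. partial_prod K a R 0) \<longlongrightarrow> 1) at_top" by (simp add: partial_prod_def)
  then show ?thesis using g_tendsto[of 0] by (metis tendsto_unique trivial_limit_at_top_linorder)
qed

lemma first_factor:
  assumes r: "cmod z = r"
  shows "cmod (partial_prod K a (2 * r) z) \<le> exp (3 * C * r)"
proof (cases "r = 0")
  case True
  then show ?thesis by (simp add: partial_prod_def)
next
  case False
  then have rpos: "r > 0" using r by auto
  have "cmod (partial_prod K a (2 * r) z) \<le> (\<Prod>k\<in>{k\<in>K. cmod (a k) < 2 * r}. 1 + r / cmod (a k))"
    by (rule P_bound) (simp add: r)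
  also have "\<dots> \<le> (\<Prod>k\<in>{k\<in>K. cmod (a k) < 2 * r}. 3 * r / cmod (a k))"
  proof (rule prod_mono, safe)
    fix k assume k: "k \<in> K" "cmod (a k) < 2 * r"
    have ak: "cmod (a k) > 0" using nonzero k by simp
    show "0 \<le> 1 + r / cmod (a k)" using rpos ak by simp
    have "1 \<le> 2 * r / cmod (a k)" using k ak by (simp add: field_simps)
    moreover have "r / cmod (a k) + 2 * r / cmod (a k) = (r + 2 * r) / cmod (a k)"
      by (rule add_divide_distrib[symmetric])
    moreover have "r + 2 * r = 3 * r" by simp
    ultimately show "1 + r / cmod (a k) \<le> 3 * r / cmod (a k)" by linarith
  qed
  also have "\<dots> = exp (\<Sum>k\<in>{k\<in>K. cmod (a k) < 2 * r}. ln (3 * r) - ln (cmod (a k)))"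
  proof -
    have "(\<Prod>k\<in>{k\<in>K. cmod (a k) < 2 * r}. 3 * r / cmod (a k)) = (\<Prod>k\<in>{k\<in>K. cmod (a k) < 2 * r}. exp (ln (3 * r) - ln (cmod (a k))))"
    proof (rule prod.cong[OF refl])
      fix k assume "k \<in> {k\<in>K. cmod (a k) < 2 * r}"
      then have ak: "cmod (a k) > 0" using nonzero by simp
      then show "3 * r / cmod (a k) = exp (ln (3 * r) - ln (cmod (a k)))"
        using rpos by (simp add: exp_diff)
    qed
    then show ?thesis by (simp add: exp_sum[OF fin_lt])
  qed
  also have "\<dots> \<le> exp (3 * C * r)"
  proof -
    define G where "G = {k\<in>K. cmod (a k) \<le> 3 * r}"
    have fG: "finite G" unfolding G_def by (rule fin)
    have s1: "(\<Sum>k\<in>{k\<in>K. cmod (a k) < 2 * r}. ln (3 * r) - ln (cmod (a k))) \<le> (\<Sum>k\<in>G. ln (3 * r) - ln (cmod (a k)))"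
    proof (rule sum_mono2[OF fG])
      show "{k\<in>K. cmod (a k) < 2 * r} \<subseteq> G" using rpos by (auto simp: G_def)
      fix k assume "k \<in> G - {k\<in>K. cmod (a k) < 2 * r}"
      then have "k \<in> K" "cmod (a k) \<le> 3 * r" by (auto simp: G_def)
      moreover have "cmod (a k) > 0" using nonzero \<open>k \<in> K\<close> by simp
      ultimately have "ln (cmod (a k)) \<le> ln (3 * r)" using rpos by (subst ln_le_cancel_iff) auto
      then show "0 \<le> ln (3 * r) - ln (cmod (a k))" by simp
    qed
    have hi: "((\<lambda>t. cnt K a 0 t / t) has_integral (\<Sum>k\<in>G. ln (3 * r) - ln (cmod (a k)))) {0..3 * r}"
      unfolding G_def using cnt_log_integral[OF fin, of 0 "3 * r"] nonzero by simp
    have hc: "((\<lambda>t. C) has_integral (3 * r * C)) {0..3 * r}"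
      using has_integral_const_real[of C 0 "3 * r"] rpos by simp
    have "(\<Sum>k\<in>G. ln (3 * r) - ln (cmod (a k))) \<le> 3 * r * C"
    proof (rule has_integral_le[OF hi hc])
      fix t :: real assume t: "t \<in> {0..3 * r}"
      show "cnt K a 0 t / t \<le> C"
      proof (cases "t = 0")
        case True then show ?thesis using C_nonneg by simp
      next
        case False
        then have "t > 0" using t by simp
        then show ?thesis using lin[of t] by (simp add: field_simps)
      qed
    qed
    then show ?thesis using s1 by (simp add: mult_ac)
  qed
  finally show ?thesis .
qed

lemma g_exp_bound: "\<exists>A B. \<forall>z. cmod (gfun z) \<le> A * exp (B * cmod z)"
proof -
  obtain M where M: "M \<ge> 0" "\<And>R. cmod (\<Sum>k\<in>{k\<in>K. cmod (a k) < R}. 1 / a k) \<le> M"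
    using sigma_bounded by blast
  have "cmod (gfun z) \<le> exp ((5 * C + 2 * M) * cmod z)" for z
  proof (cases "z = 0")
    case True then show ?thesis by (simp add: g_at_0)
  next
    case False
    define r where "r = cmod z"
    have rpos: "r > 0" using False by (simp add: r_def)
    have "eventually (\<lambda>R. cmod (partial_prod K a R z) \<le> exp ((5 * C + 2 * M) * r)) at_top"
    proof (rule eventually_at_top_linorderI[of "2 * r"])
      fix R assume R: "R \<ge> 2 * r"
      have big: "2 * cmod z \<le> cmod (a k)" if "k \<in> Ann (2 * r) R" for k
        using that by (simp add: r_def)
      obtain u where u: "(\<Prod>k\<in>Ann (2 * r) R. 1 - z / a k) = exp u"
        "cmod u \<le> cmod z * cmod (\<Sum>k\<in>Ann (2 * r) R. 1 / a k) + 2 * cmod z ^ 2 * (\<Sum>k\<in>Ann (2 * r) R. 1 / cmod (a k) ^ 2)"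
        using prod_exp_form[OF fin_ann _ big] by blast
      have s1: "cmod (\<Sum>k\<in>Ann (2 * r) R. 1 / a k) \<le> 2 * M"
      proof -
        have "(\<Sum>k\<in>Ann (2 * r) R. 1 / a k) = (\<Sum>k\<in>{k\<in>K. cmod (a k) < R}. 1 / a k) - (\<Sum>k\<in>{k\<in>K. cmod (a k) < 2 * r}. 1 / a k)"
          using sigma_split[OF R] by simp
        then have "cmod (\<Sum>k\<in>Ann (2 * r) R. 1 / a k) \<le> cmod (\<Sum>k\<in>{k\<in>K. cmod (a k) < R}. 1 / a k) + cmod (\<Sum>k\<in>{k\<in>K. cmod (a k) < 2 * r}. 1 / a k)"
          using norm_triangle_ineq4 by simp
        then show ?thesis using M(2)[of R] M(2)[of "2 * r"] by linarith
      qed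
      have s2: "(\<Sum>k\<in>Ann (2 * r) R. 1 / cmod (a k) ^ 2) \<le> 2 * C / (2 * r)"
        using tail_sq[of "2 * r" R] rpos R by simp
      have "cmod z * cmod (\<Sum>k\<in>Ann (2 * r) R. 1 / a k) \<le> r * (2 * M)"
        using s1 rpos by (simp add: r_def[symmetric])
      moreover have "2 * cmod z ^ 2 * (\<Sum>k\<in>Ann (2 * r) R. 1 / cmod (a k) ^ 2) \<le> 2 * r ^ 2 * (2 * C / (2 * r))"
        using s2 rpos by (simp add: r_def[symmetric] mult_left_mono del: times_divide_eq_right)
      ultimately have "cmod u \<le> r * (2 * M) + 2 * r ^ 2 * (2 * C / (2 * r))"
        using u(2) by linarith
      also have "\<dots> = (2 * C + 2 * M) * r" using rpos by (simp add: field_simps power2_eq_square)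
      finally have un: "cmod u \<le> (2 * C + 2 * M) * r" .
      have "cmod (partial_prod K a R z) = cmod (partial_prod K a (2 * r) z) * cmod (exp u)"
        using P_split[OF R, of z] u(1) by (simp add: norm_mult)
      also have "\<dots> \<le> exp (3 * C * r) * exp ((2 * C + 2 * M) * r)"
      proof (rule mult_mono)
        show "cmod (partial_prod K a (2 * r) z) \<le> exp (3 * C * r)" by (rule first_factor) (simp add: r_def)
        show "cmod (exp u) \<le> exp ((2 * C + 2 * M) * r)"
          using norm_exp[of u] un by (meson exp_le_cancel_iff order_trans)
      qed auto
      also have "\<dots> = exp ((5 * C + 2 * M) * r)" by (simp add: exp_add[symmetric] algebra_simps)
      finally show "cmod (partial_prod K a R z) \<le> exp ((5 * C + 2 * M) * r)" .
    qed
    then have "cmod (gfun z) \<le> exp ((5 * C + 2 * M) * r)"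
      by (intro tendsto_upperbound[OF tendsto_norm[OF g_tendsto]]) simp_all
    then show ?thesis by (simp add: r_def)
  qed
  then show ?thesis by (intro exI[of _ 1] exI[of _ "5 * C + 2 * M"]) simp
qed

end

context zset
begin

lemma exists_R: "\<exists>R>T. {k\<in>K. cmod (a k) \<le> T} = {k\<in>K. cmod (a k) < R}"
proof -
  define F where "F = {k\<in>K. T < cmod (a k) \<and> cmod (a k) \<le> T + 1}"
  have fF: "finite F" unfolding F_def by (rule finite_subset[OF _ fin[of "T + 1"]]) auto
  define R where "R = Min (insert (T + 1) ((\<lambda>k. cmod (a k)) ` F))"
  have RT: "R > T" unfolding R_def using fF by (subst Min_gr_iff) (auto simp: F_def)
  have "{k\<in>K. cmod (a k) \<le> T} = {k\<in>K. cmod (a k) < R}"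
  proof safe
    fix k assume "k \<in> K" "cmod (a k) \<le> T" then show "cmod (a k) < R" using RT by simp
  next
    fix k assume k: "k \<in> K" "cmod (a k) < R"
    show "cmod (a k) \<le> T"
    proof (rule ccontr)
      assume "\<not> cmod (a k) \<le> T"
      moreover have "R \<le> T + 1" unfolding R_def using fF by (intro Min_le) auto
      ultimately have "k \<in> F" using k by (auto simp: F_def)
      then have "R \<le> cmod (a k)" unfolding R_def using fF by (intro Min_le) auto
      then show False using k by simp
    qed
  qed
  then show ?thesis using RT by blast
qed

lemma prod_le_tendsto: "((\<lambda>T. \<Prod>k\<in>{k\<in>K. cmod (a k) \<le> T}. 1 - z / a k) \<longlongrightarrow> gfun z) at_top"
proof (rule tendstoI)
  fix e :: real assume e: "e > 0"
  then obtain R0 where R0: "\<And>R w. R0 \<le> R \<Longrightarrow> cmod w \<le> cmod z \<Longrightarrow> cmod (partial_prod K a R w - gfun w) \<le> e / 2"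
    using g_approx[of "cmod z" "e/2"] by auto
  show "eventually (\<lambda>T. dist (\<Prod>k\<in>{k\<in>K. cmod (a k) \<le> T}. 1 - z / a k) (gfun z) < e) at_top"
  proof (rule eventually_at_top_linorderI[of R0])
    fix T assume T: "T \<ge> R0"
    obtain R where R: "R > T" "{k\<in>K. cmod (a k) \<le> T} = {k\<in>K. cmod (a k) < R}" using exists_R by blast
    have "cmod (partial_prod K a R z - gfun z) \<le> e / 2" using R T by (intro R0) auto
    then show "dist (\<Prod>k\<in>{k\<in>K. cmod (a k) \<le> T}. 1 - z / a k) (gfun z) < e"
      using e R(2) by (simp add: dist_norm partial_prod_def)
  qed
qed

lemma D_bound:
  assumes z: "z \<notin> a ` K" and T: "T \<ge> 2 * cmod z + 1"
  shows "\<bar>(\<Sum>k\<in>{k\<in>K. cmod (a k - 0) \<le> T}. ln T - ln (cmod (a k - z)))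
          - (\<Sum>k\<in>{k\<in>K. cmod (a k - z) \<le> T}. ln T - ln (cmod (a k - z)))\<bar>
         \<le> (cnt K a 0 (T + cmod z) - cnt K a 0 (T - cmod z)) * (2 * cmod z / T)"
proof -
  define r where "r = cmod z"
  define G where "G = {k\<in>K. cmod (a k - 0) \<le> T}"
  define H where "H = {k\<in>K. cmod (a k - z) \<le> T}"
  define W where "W = {k\<in>K. T - r < cmod (a k - 0) \<and> cmod (a k - 0) \<le> T + r}"
  define \<phi> where "\<phi> k = ln T - ln (cmod (a k - z))" for k
  have fG: "finite G" unfolding G_def by (rule cnt_set_finite[OF fin])
  have fH: "finite H" unfolding H_def by (rule cnt_set_finite[OF fin])
  have fW: "finite W" unfolding W_def by (rule finite_subset[OF _ cnt_set_finite[OF fin, of 0 "T + r"]]) auto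
  have r0: "r \<ge> 0" by (simp add: r_def)
  have Tpos: "T > 0" using T r0 unfolding r_def by linarith
  have Tr: "T - r \<ge> T / 2" using T by (simp add: r_def)
  have tri1: "cmod (a k) \<le> cmod (a k - z) + r" for k
    unfolding r_def by (metis norm_triangle_sub add.commute)
  have tri2: "cmod (a k - z) \<le> cmod (a k) + r" for k
    unfolding r_def by (simp add: norm_triangle_ineq4)
  have azpos: "cmod (a k - z) > 0" if "k \<in> K" for k using z that by auto
  have bound: "\<bar>\<phi> k\<bar> \<le> 2 * r / T" if "k \<in> (G - H) \<union> (H - G)" for k
  proof -
    have kK: "k \<in> K" using that by (auto simp: G_def H_def)
    have apos: "cmod (a k - z) > 0" by (rule azpos[OF kK])
    show ?thesis
    proof (cases "k \<in> G - H")
      case True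
      then have lo: "T < cmod (a k - z)" and hi: "cmod (a k - z) \<le> T + r"
        using tri2[of k] by (auto simp: G_def H_def)
      have "ln (cmod (a k - z)) - ln T = ln (cmod (a k - z) / T)" using apos Tpos by (simp add: ln_div)
      also have "\<dots> \<le> cmod (a k - z) / T - 1" using apos Tpos by (intro ln_le_minus_one) simp
      also have "\<dots> = (cmod (a k - z) - T) / T" using Tpos by (simp add: diff_divide_distrib)
      also have "\<dots> \<le> r / T" using hi Tpos by (intro divide_right_mono) auto
      also have "\<dots> \<le> 2 * r / T" using r0 Tpos by (simp add: divide_right_mono)
      finally have "ln (cmod (a k - z)) - ln T \<le> 2 * r / T" .
      moreover have "ln T \<le> ln (cmod (a k - z))" using lo Tpos by (intro ln_mono) auto
      ultimately show ?thesis by (simp add: \<phi>_def)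
    next
      case False
      then have kHG: "k \<in> H - G" using that by blast
      then have hi: "cmod (a k - z) \<le> T" and lo: "T - r < cmod (a k - z)"
        using tri1[of k] by (auto simp: G_def H_def)
      have "ln T - ln (cmod (a k - z)) = ln (T / cmod (a k - z))" using apos Tpos by (simp add: ln_div)
      also have "\<dots> \<le> T / cmod (a k - z) - 1" using apos Tpos by (intro ln_le_minus_one) simp
      also have "\<dots> = (T - cmod (a k - z)) / cmod (a k - z)" using apos by (simp add: field_simps)
      also have "\<dots> \<le> r / (T / 2)"
        using lo Tr apos r0 Tpos by (intro frac_le) auto
      also have "\<dots> = 2 * r / T" by simp
      finally have "ln T - ln (cmod (a k - z)) \<le> 2 * r / T" .
      moreover have "ln (cmod (a k - z)) \<le> ln T" using hi apos by (intro ln_mono) auto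
      ultimately show ?thesis by (simp add: \<phi>_def)
    qed
  qed
  have split: "(\<Sum>k\<in>G. \<phi> k) - (\<Sum>k\<in>H. \<phi> k) = (\<Sum>k\<in>G - H. \<phi> k) - (\<Sum>k\<in>H - G. \<phi> k)"
    using sum.Int_Diff[OF fG, of \<phi> H] sum.Int_Diff[OF fH, of \<phi> G] by (simp add: Int_commute)
  have "\<bar>(\<Sum>k\<in>G - H. \<phi> k) - (\<Sum>k\<in>H - G. \<phi> k)\<bar> \<le> (\<Sum>k\<in>G - H. \<bar>\<phi> k\<bar>) + (\<Sum>k\<in>H - G. \<bar>\<phi> k\<bar>)"
    using sum_abs[of \<phi> "G - H"] sum_abs[of \<phi> "H - G"] by linarith
  also have "\<dots> = (\<Sum>k\<in>(G - H) \<union> (H - G). \<bar>\<phi> k\<bar>)"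
    by (rule sum.union_disjoint[symmetric]) (use fG fH in auto)
  also have "\<dots> \<le> real (card ((G - H) \<union> (H - G))) * (2 * r / T)"
    by (rule sum_bounded_above) (rule bound)
  also have "\<dots> \<le> real (card W) * (2 * r / T)"
  proof (intro mult_right_mono of_nat_mono card_mono[OF fW])
    show "G - H \<union> (H - G) \<subseteq> W"
    proof safe
      fix k assume "k \<in> G" "k \<notin> H"
      then show "k \<in> W" using tri2[of k] by (auto simp: G_def H_def W_def)
    next
      fix k assume "k \<in> H" "k \<notin> G"
      then show "k \<in> W" using tri1[of k] by (auto simp: G_def H_def W_def)
    qed
  qed (use r0 Tpos in auto)
  also have "real (card W) = cnt K a 0 (T + r) - cnt K a 0 (T - r)"
    unfolding W_def by (rule cnt_window[OF fin]) (use r0 in simp)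
  finally show ?thesis using split by (simp add: r_def G_def H_def \<phi>_def)
qed

lemma logA:
  assumes z: "z \<notin> a ` K"
    and window: "\<And>r \<epsilon>. r \<ge> 0 \<Longrightarrow> \<epsilon> > 0 \<Longrightarrow> eventually (\<lambda>T. cnt K a 0 (T + r) - cnt K a 0 (T - r) \<le> \<epsilon> * T) at_top"
  shows "\<And>T. ((\<lambda>t. (cnt K a 0 t - cnt K a z t) / t) has_integral
            ((\<Sum>k\<in>{k\<in>K. cmod (a k - 0) \<le> T}. ln T - ln (cmod (a k - 0)))
           - (\<Sum>k\<in>{k\<in>K. cmod (a k - z) \<le> T}. ln T - ln (cmod (a k - z))))) {0..T}"
    and "((\<lambda>T. integral {0..T} (\<lambda>t. (cnt K a 0 t - cnt K a z t) / t)) \<longlongrightarrow> ln (cmod (gfun z))) at_top"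
proof -
  define I0 where "I0 T = (\<Sum>k\<in>{k\<in>K. cmod (a k - 0) \<le> T}. ln T - ln (cmod (a k - 0)))" for T
  define Iz where "Iz T = (\<Sum>k\<in>{k\<in>K. cmod (a k - z) \<le> T}. ln T - ln (cmod (a k - z)))" for T
  have hi: "((\<lambda>t. (cnt K a 0 t - cnt K a z t) / t) has_integral (I0 T - Iz T)) {0..T}" for T
  proof -
    have "((\<lambda>t. cnt K a 0 t / t - cnt K a z t / t) has_integral (I0 T - Iz T)) {0..T}"
      unfolding I0_def Iz_def
      by (intro has_integral_diff cnt_log_integral[OF fin]) (use nonzero z in auto)
    then show ?thesis by (simp add: diff_divide_distrib)
  qed
  then show "\<And>T. ((\<lambda>t. (cnt K a 0 t - cnt K a z t) / t) has_integral
            ((\<Sum>k\<in>{k\<in>K. cmod (a k - 0) \<le> T}. ln T - ln (cmod (a k - 0)))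
           - (\<Sum>k\<in>{k\<in>K. cmod (a k - z) \<le> T}. ln T - ln (cmod (a k - z))))) {0..T}"
    by (simp add: I0_def Iz_def)
  define r where "r = cmod z"
  define Ls where "Ls T = (\<Sum>k\<in>{k\<in>K. cmod (a k) \<le> T}. ln (cmod (a k - z)) - ln (cmod (a k)))" for T
  define Dt where "Dt T = (\<Sum>k\<in>{k\<in>K. cmod (a k - 0) \<le> T}. ln T - ln (cmod (a k - z)))
          - (\<Sum>k\<in>{k\<in>K. cmod (a k - z) \<le> T}. ln T - ln (cmod (a k - z)))" for T
  have eq: "I0 T - Iz T = Ls T + Dt T" for T
  proof -
    have "(\<Sum>k\<in>{k\<in>K. cmod (a k) \<le> T}. ln T - ln (cmod (a k))) =
      (\<Sum>k\<in>{k\<in>K. cmod (a k) \<le> T}. ln (cmod (a k - z)) - ln (cmod (a k))) +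
      (\<Sum>k\<in>{k\<in>K. cmod (a k) \<le> T}. ln T - ln (cmod (a k - z)))"
      by (simp add: sum.distrib[symmetric])
    then show ?thesis unfolding Ls_def Dt_def Iz_def I0_def by simp
  qed
  have Ls_eq: "Ls T = ln (cmod (\<Prod>k\<in>{k\<in>K. cmod (a k) \<le> T}. 1 - z / a k))" for T
  proof -
    have "cmod (\<Prod>k\<in>{k\<in>K. cmod (a k) \<le> T}. 1 - z / a k) = (\<Prod>k\<in>{k\<in>K. cmod (a k) \<le> T}. cmod (a k - z) / cmod (a k))"
    proof -
      have "cmod (\<Prod>k\<in>{k\<in>K. cmod (a k) \<le> T}. 1 - z / a k) = (\<Prod>k\<in>{k\<in>K. cmod (a k) \<le> T}. cmod (1 - z / a k))"
        by (simp add: prod_norm)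
      also have "\<dots> = (\<Prod>k\<in>{k\<in>K. cmod (a k) \<le> T}. cmod (a k - z) / cmod (a k))"
      proof (rule prod.cong[OF refl])
        fix k assume "k \<in> {k\<in>K. cmod (a k) \<le> T}"
        then have "a k \<noteq> 0" using nonzero by auto
        then have "1 - z / a k = (a k - z) / a k" by (simp add: field_simps)
        then show "cmod (1 - z / a k) = cmod (a k - z) / cmod (a k)" by (simp add: norm_divide)
      qed
      finally show ?thesis .
    qed
    also have "ln \<dots> = (\<Sum>k\<in>{k\<in>K. cmod (a k) \<le> T}. ln (cmod (a k - z) / cmod (a k)))"
      by (rule ln_prod[OF fin]) (use nonzero z in auto)
    also have "\<dots> = Ls T" unfolding Ls_def
    proof (intro sum.cong refl)
      fix k assume k: "k \<in> {k\<in>K. cmod (a k) \<le> T}"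
      then have "a k \<noteq> 0" "a k \<noteq> z" using nonzero z by auto
      then show "ln (cmod (a k - z) / cmod (a k)) = ln (cmod (a k - z)) - ln (cmod (a k))"
        by (intro ln_divide_pos) auto
    qed
    finally show ?thesis ..
  qed
  have Ls_lim: "(Ls \<longlongrightarrow> ln (cmod (gfun z))) at_top"
    unfolding Ls_eq[abs_def]
    by (intro tendsto_intros prod_le_tendsto) (use g_nonzero[OF z] in simp)
  have Dt_lim: "(Dt \<longlongrightarrow> 0) at_top"
  proof (rule tendstoI)
    fix e :: real assume e: "e > 0"
    define \<epsilon> where "\<epsilon> = e / (2 * (2 * r + 1))"
    have "2 * (2 * r + 1) > 0" by (simp add: r_def add_nonneg_pos)
    then have \<epsilon>: "\<epsilon> > 0" using e unfolding \<epsilon>_def by simp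
    have "eventually (\<lambda>T. cnt K a 0 (T + r) - cnt K a 0 (T - r) \<le> \<epsilon> * T) at_top"
      by (rule window) (use \<epsilon> in \<open>auto simp: r_def\<close>)
    moreover have "eventually (\<lambda>T. T \<ge> 2 * r + 1) at_top" by (rule eventually_ge_at_top)
    ultimately show "eventually (\<lambda>T. dist (Dt T) 0 < e) at_top"
    proof eventually_elim
      case (elim T)
      have Tpos: "T > 0" using elim by (simp add: r_def) (smt (verit) norm_ge_zero)
      have "\<bar>Dt T\<bar> \<le> (cnt K a 0 (T + r) - cnt K a 0 (T - r)) * (2 * r / T)"
        unfolding Dt_def r_def by (rule D_bound[OF z]) (use elim in \<open>simp add: r_def\<close>)
      also have "\<dots> \<le> (\<epsilon> * T) * (2 * r / T)"
        using elim Tpos by (intro mult_right_mono) (auto simp: r_def)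
      also have "\<dots> = 2 * r * \<epsilon>" using Tpos by simp
      also have "\<dots> < e"
      proof -
        have "2 * r * \<epsilon> = e * (2 * r / (2 * (2 * r + 1)))" by (simp add: \<epsilon>_def)
        also have "\<dots> < e * 1"
        proof (intro mult_strict_left_mono e)
          have r0: "r \<ge> 0" by (simp add: r_def)
          then have "2 * r < 2 * (2 * r + 1)" by simp
          then show "2 * r / (2 * (2 * r + 1)) < 1" using r0 by (subst divide_less_eq_1_pos) auto
        qed
        finally show ?thesis by simp
      qed
      finally show ?case by simp
    qed
  qed
  have "((\<lambda>T. Ls T + Dt T) \<longlongrightarrow> ln (cmod (gfun z)) + 0) at_top"
    by (intro tendsto_add Ls_lim Dt_lim)
  then show "((\<lambda>T. integral {0..T} (\<lambda>t. (cnt K a 0 t - cnt K a z t) / t)) \<longlongrightarrow> ln (cmod (gfun z))) at_top"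
  proof -
    have "integral {0..T} (\<lambda>t. (cnt K a 0 t - cnt K a z t) / t) = Ls T + Dt T" for T
      using hi[of T] eq[of T] by (simp add: integral_unique)
    then show ?thesis using \<open>((\<lambda>T. Ls T + Dt T) \<longlongrightarrow> ln (cmod (gfun z)) + 0) at_top\<close> by simp
  qed
qed

end

lemma pint:
  fixes l :: real
  assumes c: "0 < c" and \<alpha>: "0 \<le> \<alpha>" "\<alpha> \<le> T"
  shows "((\<lambda>t. if c \<le> t then l / t else 0) has_integral (if c \<le> T then l * (ln T - ln (max \<alpha> c)) else 0)) {\<alpha>..T}"
proof (cases "c \<le> T")
  case True
  have "((\<lambda>t. if max \<alpha> c \<le> t then l / t else 0) has_integral ((\<lambda>t. l * ln t) T - (\<lambda>t. l * ln t) (max \<alpha> c))) {\<alpha>..T}"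
  proof (rule has_integral_step)
    fix t assume "max \<alpha> c \<le> t" "t \<le> T"
    then have "t > 0" using c by linarith
    then show "((\<lambda>t. l * ln t) has_real_derivative l / t) (at t)"
      by (auto intro!: derivative_eq_intros)
  qed (use True \<alpha> in auto)
  then have "((\<lambda>t. if max \<alpha> c \<le> t then l / t else 0) has_integral (l * (ln T - ln (max \<alpha> c)))) {\<alpha>..T}"
    by (simp add: algebra_simps)
  then have "((\<lambda>t. if c \<le> t then l / t else 0) has_integral (l * (ln T - ln (max \<alpha> c)))) {\<alpha>..T}"
    by (rule has_integral_eq[rotated]) auto
  then show ?thesis using True by simp
next
  case False
  have "((\<lambda>t. 0) has_integral 0) {\<alpha>..T}" by simp
  then have "((\<lambda>t. if c \<le> t then l / t else 0) has_integral 0) {\<alpha>..T}"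
    by (rule has_integral_eq[rotated]) (use False in auto)
  then show ?thesis using False by simp
qed

lemma hd_pow:
  fixes z :: complex
  assumes "i \<le> n"
  shows "(deriv ^^ i) (\<lambda>w. (w - z) ^ n) = (\<lambda>w. fact n / fact (n - i) * (w - z) ^ (n - i))"
  using assms
proof (induction i)
  case 0
  then show ?case by simp
next
  case (Suc i)
  then have IH: "(deriv ^^ i) (\<lambda>w. (w - z) ^ n) = (\<lambda>w. fact n / fact (n - i) * (w - z) ^ (n - i))" by simp
  have ni: "n - i = Suc (n - Suc i)" using Suc.prems by simp
  have "deriv (\<lambda>w. fact n / fact (n - i) * (w - z) ^ (n - i)) = (\<lambda>w. fact n / fact (n - Suc i) * (w - z) ^ (n - Suc i))"
  proof
    fix w
    have dd: "((\<lambda>w. fact n / fact (n - i) * (w - z) ^ (n - i)) has_field_derivative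
           fact n / fact (n - i) * (of_nat (n - i) * (w - z) ^ (n - i - 1))) (at w)"
    proof -
      have d1: "((\<lambda>w. w - z) has_field_derivative 1) (at w)"
        using DERIV_diff[OF DERIV_ident DERIV_const] by simp
      have "((\<lambda>w. (w - z) ^ (n - i)) has_field_derivative of_nat (n - i) * (1 * (w - z) ^ (n - i - Suc 0))) (at w)"
        by (rule DERIV_power[OF d1])
      then have "((\<lambda>w. fact n / fact (n - i) * (w - z) ^ (n - i)) has_field_derivative fact n / fact (n - i) * (of_nat (n - i) * (1 * (w - z) ^ (n - i - Suc 0)))) (at w)"
        by (rule DERIV_cmult)
      then show ?thesis by simp
    qed
    moreover have "n - i - 1 = n - Suc i" by simp
    have eq: "fact n / fact (n - i) * (of_nat (n - i) * (w - z) ^ (n - i - 1)) = (fact n / fact (n - Suc i) * (w - z) ^ (n - Suc i) :: complex)"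
    proof -
      have "(fact (n - i) :: complex) = of_nat (n - i) * fact (n - Suc i)" unfolding ni by simp
      moreover have "(of_nat (n - i) :: complex) \<noteq> 0" using ni by simp
      moreover have gen: "\<And>A B c p :: complex. c \<noteq> 0 \<Longrightarrow> B \<noteq> 0 \<Longrightarrow> A / (c * B) * (c * p) = A / B * p"
        by (simp add: field_simps)
      ultimately show ?thesis using \<open>n - i - 1 = n - Suc i\<close>
        by (simp only:) (rule gen, simp_all)
    qed
    from DERIV_imp_deriv[OF dd]
    have "deriv (\<lambda>w. fact n / fact (n - i) * (w - z) ^ (n - i)) w = fact n / fact (n - i) * (of_nat (n - i) * (w - z) ^ (n - i - 1))" .
    then show "deriv (\<lambda>w. fact n / fact (n - i) * (w - z) ^ (n - i)) w = fact n / fact (n - Suc i) * (w - z) ^ (n - Suc i)"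
      using eq by (rule trans)
  qed
  then show ?case by (simp add: IH)
qed

lemma hd_mult_pow:
  fixes z :: complex
  assumes h: "h holomorphic_on UNIV"
  shows "(deriv ^^ n) (\<lambda>w. (w - z) ^ n * h w) z = fact n * h z"
proof -
  have p: "(\<lambda>w. (w - z) ^ n) holomorphic_on UNIV" by (intro holomorphic_intros)
  have "(deriv ^^ n) (\<lambda>w. (w - z) ^ n * h w) z =
        (\<Sum>i = 0..n. of_nat (n choose i) * (deriv ^^ i) (\<lambda>w. (w - z) ^ n) z * (deriv ^^ (n - i)) h z)"
    by (rule higher_deriv_mult[OF p h]) auto
  also have "\<dots> = (\<Sum>i = 0..n. if i = n then fact n * h z else 0)"
  proof (rule sum.cong[OF refl])
    fix i assume "i \<in> {0..n}"
    then have i: "i \<le> n" by simp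
    show "of_nat (n choose i) * (deriv ^^ i) (\<lambda>w. (w - z) ^ n) z * (deriv ^^ (n - i)) h z = (if i = n then fact n * h z else 0)"
    proof (cases "i = n")
      case True
      have "(deriv ^^ i) (\<lambda>w. (w - z) ^ n) z = fact n" using hd_pow[of n n z] True by simp
      then show ?thesis using True by simp
    next
      case False
      then have "n - i > 0" using i by simp
      then have "(deriv ^^ i) (\<lambda>w. (w - z) ^ n) z = 0" using hd_pow[OF i, of z] by simp
      then show ?thesis using False by simp
    qed
  qed
  also have "\<dots> = fact n * h z" by simp
  finally show ?thesis .
qed

lemma zset_remove:
  assumes zs: "zset K a C L" and z: "z \<in> a ` K"
  shows "zset {k\<in>K. a k \<noteq> z} a C (L - of_nat (card {k\<in>K. a k = z}) / z)"
proof -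
  interpret zset K a C L by (rule zs)
  have z0: "z \<noteq> 0" using z nonzero by auto
  have finZ: "finite {k\<in>K. a k = z}" by (rule finite_subset[OF _ fin[of "cmod z"]]) auto
  show ?thesis
  proof
    show "\<And>k. k \<in> {k\<in>K. a k \<noteq> z} \<Longrightarrow> a k \<noteq> 0" using nonzero by auto
    show "\<And>R. finite {k\<in>{k\<in>K. a k \<noteq> z}. cmod (a k) \<le> R}"
      by (rule finite_subset[OF _ fin]) auto
    show "C \<ge> 0" by (rule C_nonneg)
    show "cnt {k\<in>K. a k \<noteq> z} a 0 t \<le> C * t" if "t \<ge> 0" for t
    proof -
      have "cnt {k\<in>K. a k \<noteq> z} a 0 t \<le> cnt K a 0 t"
        unfolding cnt_def using cnt_set_finite[OF fin, of 0 t]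
        by (intro of_nat_mono card_mono) auto
      then show ?thesis using lin[OF that] by linarith
    qed
    have ev: "eventually (\<lambda>R. (\<Sum>k\<in>{k\<in>K. cmod (a k) < R}. 1 / a k) - of_nat (card {k\<in>K. a k = z}) / z
              = (\<Sum>k\<in>{k\<in>{k\<in>K. a k \<noteq> z}. cmod (a k) < R}. 1 / a k)) at_top"
    proof (rule eventually_at_top_linorderI[of "cmod z + 1"])
      fix R assume R: "R \<ge> cmod z + 1"
      have e: "{k\<in>K. cmod (a k) < R} = {k\<in>{k\<in>K. a k \<noteq> z}. cmod (a k) < R} \<union> {k\<in>K. a k = z}"
        using R by auto
      have "(\<Sum>k\<in>{k\<in>K. cmod (a k) < R}. 1 / a k) = (\<Sum>k\<in>{k\<in>{k\<in>K. a k \<noteq> z}. cmod (a k) < R}. 1 / a k) + (\<Sum>k\<in>{k\<in>K. a k = z}. 1 / a k)"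
        unfolding e by (rule sum.union_disjoint) (use fin_lt finZ in \<open>auto intro: finite_subset[OF _ fin_lt[of R]]\<close>)
      moreover have "(\<Sum>k\<in>{k\<in>K. a k = z}. 1 / a k) = of_nat (card {k\<in>K. a k = z}) / z"
        by (simp add: divide_inverse)
      ultimately show "(\<Sum>k\<in>{k\<in>K. cmod (a k) < R}. 1 / a k) - of_nat (card {k\<in>K. a k = z}) / z
              = (\<Sum>k\<in>{k\<in>{k\<in>K. a k \<noteq> z}. cmod (a k) < R}. 1 / a k)" by simp
    qed
    show "((\<lambda>R. \<Sum>k\<in>{k\<in>{k\<in>K. a k \<noteq> z}. cmod (a k) < R}. 1 / a k) \<longlongrightarrow> L - of_nat (card {k\<in>K. a k = z}) / z) at_top"
      by (rule Lim_transform_eventually[OF tendsto_diff[OF sigma_lim tendsto_const] ev])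
  qed
qed

lemma cnt_remove_z:
  assumes fin: "\<And>R. finite {k\<in>K. cmod (a k) \<le> R}" and t: "t \<ge> 0"
  shows "cnt K a z t = cnt {k\<in>K. a k \<noteq> z} a z t + real (card {k\<in>K. a k = z})"
proof -
  have e: "{k\<in>K. cmod (a k - z) \<le> t} = {k\<in>{k\<in>K. a k \<noteq> z}. cmod (a k - z) \<le> t} \<union> {k\<in>K. a k = z}"
    using t by auto
  have "card {k\<in>K. cmod (a k - z) \<le> t} = card {k\<in>{k\<in>K. a k \<noteq> z}. cmod (a k - z) \<le> t} + card {k\<in>K. a k = z}"
    unfolding e
    by (rule card_Un_disjoint)
       (auto intro: finite_subset[OF _ cnt_set_finite[OF fin, of z t]] simp: t)
  then show ?thesis by (simp add: cnt_def)
qed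

lemma cnt_remove_0:
  assumes fin: "\<And>R. finite {k\<in>K. cmod (a k) \<le> R}"
  shows "cnt K a 0 t = cnt {k\<in>K. a k \<noteq> z} a 0 t + (if cmod z \<le> t then real (card {k\<in>K. a k = z}) else 0)"
proof -
  have e: "{k\<in>K. cmod (a k - 0) \<le> t} = {k\<in>{k\<in>K. a k \<noteq> z}. cmod (a k - 0) \<le> t} \<union> (if cmod z \<le> t then {k\<in>K. a k = z} else {})"
    by auto
  have "card {k\<in>K. cmod (a k - 0) \<le> t} = card {k\<in>{k\<in>K. a k \<noteq> z}. cmod (a k - 0) \<le> t} + card (if cmod z \<le> t then {k\<in>K. a k = z} else {})"
    unfolding e
    by (rule card_Un_disjoint)
       (auto intro: finite_subset[OF _ cnt_set_finite[OF fin, of 0 t]])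
  then show ?thesis by (simp add: cnt_def)
qed

lemma window_remove:
  assumes fin: "\<And>R. finite {k\<in>K. cmod (a k) \<le> R}"
    and window: "\<And>r \<epsilon>. r \<ge> 0 \<Longrightarrow> \<epsilon> > 0 \<Longrightarrow> eventually (\<lambda>T. cnt K a 0 (T + r) - cnt K a 0 (T - r) \<le> \<epsilon> * T) at_top"
    and r: "r \<ge> 0" and \<epsilon>: "\<epsilon> > 0"
  shows "eventually (\<lambda>T. cnt {k\<in>K. a k \<noteq> z} a 0 (T + r) - cnt {k\<in>K. a k \<noteq> z} a 0 (T - r) \<le> \<epsilon> * T) at_top"
  using window[OF r \<epsilon>]
proof eventually_elim
  case (elim T)
  have fin': "\<And>R. finite {k\<in>{k\<in>K. a k \<noteq> z}. cmod (a k) \<le> R}"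
    by (rule finite_subset[OF _ fin]) auto
  have "cnt {k\<in>K. a k \<noteq> z} a 0 (T + r) - cnt {k\<in>K. a k \<noteq> z} a 0 (T - r)
      = real (card {k\<in>{k\<in>K. a k \<noteq> z}. T - r < cmod (a k - 0) \<and> cmod (a k - 0) \<le> T + r})"
    by (rule cnt_window[OF fin', symmetric]) (use r in simp)
  also have "\<dots> \<le> real (card {k\<in>K. T - r < cmod (a k - 0) \<and> cmod (a k - 0) \<le> T + r})"
    by (intro of_nat_mono card_mono) (auto intro: finite_subset[OF _ cnt_set_finite[OF fin, of 0 "T + r"]])
  also have "\<dots> = cnt K a 0 (T + r) - cnt K a 0 (T - r)"
    by (rule cnt_window[OF fin]) (use r in simp)
  finally show ?case using elim by linarith
qed

context zset
begin

lemma zero_point: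
  assumes window: "\<And>r \<epsilon>. r \<ge> 0 \<Longrightarrow> \<epsilon> > 0 \<Longrightarrow> eventually (\<lambda>T. cnt K a 0 (T + r) - cnt K a 0 (T - r) \<le> \<epsilon> * T) at_top"
    and z: "z \<in> a ` K"
  shows "\<forall>\<epsilon>>0. (\<lambda>t. (cnt K a 0 t - cnt K a z t) / t) integrable_on {\<epsilon>..}"
    and "filterlim (\<lambda>\<epsilon>. integral {\<epsilon>..} (\<lambda>t. (cnt K a 0 t - cnt K a z t) / t)) at_bot (at_right 0)"
    and "\<exists>I1 I2. ((\<lambda>t. (cnt K a 0 t - cnt K a z t) / t) has_integral I1) {1..}
         \<and> ((\<lambda>t. (cnt K a 0 t - cnt K a z t + real (card {k\<in>K. a k = z})) / t) has_integral I2) {0..1}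
         \<and> ln (cmod ((deriv ^^ card {k\<in>K. a k = z}) gfun z / fact (card {k\<in>K. a k = z}))) = I1 + I2"
proof -
  define K' where "K' = {k\<in>K. a k \<noteq> z}"
  define l where "l = card {k\<in>K. a k = z}"
  define f where "f t = (cnt K a 0 t - cnt K a z t) / t" for t
  have z0: "z \<noteq> 0" using z nonzero by auto
  have rz: "cmod z > 0" using z0 by simp
  have finZ: "finite {k\<in>K. a k = z}" by (rule finite_subset[OF _ fin[of "cmod z"]]) auto
  have lpos: "l > 0" unfolding l_def using finZ z by (auto simp: card_gt_0_iff)
  interpret z': zset K' a C "L - of_nat l / z"
    using zset_remove[OF zset_axioms z] by (simp add: K'_def l_def)
  have zK': "z \<notin> a ` K'" by (auto simp: K'_def)
  have window': "\<And>r \<epsilon>. r \<ge> 0 \<Longrightarrow> \<epsilon> > 0 \<Longrightarrow> eventually (\<lambda>T. cnt K' a 0 (T + r) - cnt K' a 0 (T - r) \<le> \<epsilon> * T) at_top"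
    unfolding K'_def by (rule window_remove[OF fin window])
  define h where "h t = (cnt K' a 0 t - cnt K' a z t) / t" for t
  define \<Lambda> where "\<Lambda> = ln (cmod (z'.gfun z))"
  have h_int: "h integrable_on {0..T}" for T
    using z'.logA(1)[OF zK' window', of T] unfolding h_def[abs_def] by blast
  have h_lim: "((\<lambda>T. integral {0..T} h) \<longlongrightarrow> \<Lambda>) at_top"
    using z'.logA(2)[OF zK' window'] unfolding h_def[abs_def] \<Lambda>_def .
  obtain \<delta>1 where \<delta>1: "\<delta>1 > 0" "\<And>t. t < \<delta>1 \<Longrightarrow> cnt K' a 0 t = 0"
    using cnt_zero_near0[OF z'.fin, of 0] z'.nonzero by blast
  obtain \<delta>2 where \<delta>2: "\<delta>2 > 0" "\<And>t. t < \<delta>2 \<Longrightarrow> cnt K' a z t = 0"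
    using cnt_zero_near0[OF z'.fin, of z] by (auto simp: K'_def)
  define \<delta> where "\<delta> = min \<delta>1 \<delta>2"
  have \<delta>: "\<delta> > 0" "\<And>t. t < \<delta> \<Longrightarrow> h t = 0"
    using \<delta>1 \<delta>2 by (auto simp: \<delta>_def h_def)
  define p where "p t = (if cmod z \<le> t then real l / t else 0)" for t
  have c0: "cnt K a 0 t = cnt K' a 0 t + (if cmod z \<le> t then real l else 0)" for t
    unfolding K'_def l_def by (rule cnt_remove_0[OF fin])
  have cz: "cnt K a z t = cnt K' a z t + real l" if "t \<ge> 0" for t
    unfolding K'_def l_def by (rule cnt_remove_z[OF fin that])
  have fdec: "f t = h t + p t - real l / t" if "t \<ge> 0" for t
    using c0[of t] cz[OF that]
    by (auto simp: f_def h_def p_def diff_divide_distrib add_divide_distrib)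
  have key: "(f has_integral (\<Lambda> - integral {0..\<epsilon>} h - real l * ln (max \<epsilon> (cmod z)) + real l * ln \<epsilon>)) {\<epsilon>..}"
    if \<epsilon>: "\<epsilon> > 0" for \<epsilon>
  proof -
    define V where "V T = (integral {0..T} h - integral {0..\<epsilon>} h)
        + (if cmod z \<le> T then real l * (ln T - ln (max \<epsilon> (cmod z))) else 0) - real l * (ln T - ln \<epsilon>)" for T
    have hiT: "(f has_integral V T) {\<epsilon>..T}" if T: "T \<ge> \<epsilon>" for T
    proof -
      have "h integrable_on {\<epsilon>..T}"
        by (rule integrable_subinterval_real[OF h_int[of T]]) (use \<epsilon> in auto)
      then have "(h has_integral (integral {\<epsilon>..T} h)) {\<epsilon>..T}" by (simp add: integrable_integral)
      moreover have "integral {\<epsilon>..T} h = integral {0..T} h - integral {0..\<epsilon>} h"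
        using Henstock_Kurzweil_Integration.integral_combine[where f=h and a=0 and c=\<epsilon> and b=T] \<epsilon> T h_int[of T] by simp
      ultimately have H: "(h has_integral (integral {0..T} h - integral {0..\<epsilon>} h)) {\<epsilon>..T}" by simp
      have P: "(p has_integral (if cmod z \<le> T then real l * (ln T - ln (max \<epsilon> (cmod z))) else 0)) {\<epsilon>..T}"
        using pint[of "cmod z" \<epsilon> T "real l"] rz \<epsilon> T unfolding p_def[abs_def] by simp
      have "((\<lambda>t. if \<epsilon> \<le> t then real l / t else 0) has_integral (if \<epsilon> \<le> T then real l * (ln T - ln (max \<epsilon> \<epsilon>)) else 0)) {\<epsilon>..T}"
        using pint[of \<epsilon> \<epsilon> T "real l"] \<epsilon> T by simp
      then have "((\<lambda>t. if \<epsilon> \<le> t then real l / t else 0) has_integral (real l * (ln T - ln \<epsilon>))) {\<epsilon>..T}"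
        using T by simp
      then have Q: "((\<lambda>t. real l / t) has_integral (real l * (ln T - ln \<epsilon>))) {\<epsilon>..T}"
        by (rule has_integral_eq[rotated]) auto
      have "((\<lambda>t. h t + p t - real l / t) has_integral V T) {\<epsilon>..T}"
        unfolding V_def by (intro has_integral_diff has_integral_add H P Q)
      then show ?thesis
        by (rule has_integral_eq[rotated]) (use \<epsilon> fdec in auto)
    qed
    show ?thesis
    proof (rule has_integral_Ici_lim)
      show "\<And>T. \<epsilon> \<le> T \<Longrightarrow> f integrable_on {\<epsilon>..T}" using hiT by blast
      have "eventually (\<lambda>T. integral {0..T} h - integral {0..\<epsilon>} h - real l * ln (max \<epsilon> (cmod z)) + real l * ln \<epsilon>
               = integral {\<epsilon>..T} f) at_top"
      proof (rule eventually_at_top_linorderI[of "max \<epsilon> (cmod z)"])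
        fix T assume T: "T \<ge> max \<epsilon> (cmod z)"
        then have "integral {\<epsilon>..T} f = V T" using hiT[of T] by (simp add: integral_unique)
        then show "integral {0..T} h - integral {0..\<epsilon>} h - real l * ln (max \<epsilon> (cmod z)) + real l * ln \<epsilon> = integral {\<epsilon>..T} f"
          using T by (simp add: V_def algebra_simps)
      qed
      moreover have "((\<lambda>T. integral {0..T} h - integral {0..\<epsilon>} h - real l * ln (max \<epsilon> (cmod z)) + real l * ln \<epsilon>)
          \<longlongrightarrow> \<Lambda> - integral {0..\<epsilon>} h - real l * ln (max \<epsilon> (cmod z)) + real l * ln \<epsilon>) at_top"
        by (intro tendsto_intros h_lim)
      ultimately show "((\<lambda>T. integral {\<epsilon>..T} f) \<longlongrightarrow> \<Lambda> - integral {0..\<epsilon>} h - real l * ln (max \<epsilon> (cmod z)) + real l * ln \<epsilon>) at_top"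
        by (rule Lim_transform_eventually[rotated])
    qed
  qed
  show "\<forall>\<epsilon>>0. (\<lambda>t. (cnt K a 0 t - cnt K a z t) / t) integrable_on {\<epsilon>..}"
    using key unfolding f_def[abs_def] by blast
  have hz: "integral {0..\<epsilon>} h = 0" if "\<epsilon> < \<delta>" for \<epsilon>
  proof -
    have "((\<lambda>t. 0) has_integral 0) {0..\<epsilon>}" by simp
    then have "(h has_integral 0) {0..\<epsilon>}"
      by (rule has_integral_eq[rotated]) (use that \<delta> in auto)
    then show ?thesis by (rule integral_unique)
  qed
  have intf: "integral {\<epsilon>..} f = \<Lambda> - real l * ln (cmod z) + real l * ln \<epsilon>" if "0 < \<epsilon>" "\<epsilon> < min \<delta> (cmod z)" for \<epsilon>
  proof -
    have "integral {\<epsilon>..} f = \<Lambda> - integral {0..\<epsilon>} h - real l * ln (max \<epsilon> (cmod z)) + real l * ln \<epsilon>"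
      using key[OF that(1)] by (rule integral_unique)
    then show ?thesis using hz[of \<epsilon>] that by simp
  qed
  show "filterlim (\<lambda>\<epsilon>. integral {\<epsilon>..} (\<lambda>t. (cnt K a 0 t - cnt K a z t) / t)) at_bot (at_right 0)"
    unfolding f_def[symmetric] filterlim_at_bot
  proof
    fix Zb :: real
    define b where "b = min (min \<delta> (cmod z)) (exp ((Zb - \<Lambda> + real l * ln (cmod z)) / real l))"
    have b: "b > 0" using \<delta> rz by (simp add: b_def)
    show "eventually (\<lambda>\<epsilon>. integral {\<epsilon>..} f \<le> Zb) (at_right 0)"
      unfolding eventually_at_right_field
    proof (intro exI[of _ b] conjI allI impI b)
      fix \<epsilon> :: real assume e0: "\<epsilon> > 0" and eb: "\<epsilon> < b"
      have "\<epsilon> < exp ((Zb - \<Lambda> + real l * ln (cmod z)) / real l)" using eb by (simp add: b_def)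
      then have "ln \<epsilon> < (Zb - \<Lambda> + real l * ln (cmod z)) / real l"
        using e0 by (metis exp_less_cancel_iff exp_ln)
      then have "real l * ln \<epsilon> < Zb - \<Lambda> + real l * ln (cmod z)"
        using lpos by (simp add: field_simps)
      moreover have "integral {\<epsilon>..} f = \<Lambda> - real l * ln (cmod z) + real l * ln \<epsilon>"
        using e0 eb by (intro intf) (auto simp: b_def)
      ultimately show "integral {\<epsilon>..} f \<le> Zb" by linarith
    qed
  qed
  have prod_id: "eventually (\<lambda>R. partial_prod K a R w = partial_prod K' a R w * (1 - w / z) ^ l) at_top" for w
  proof (rule eventually_at_top_linorderI[of "cmod z + 1"])
    fix R assume R: "R \<ge> cmod z + 1"
    have e: "{k\<in>K. cmod (a k) < R} = {k\<in>K'. cmod (a k) < R} \<union> {k\<in>K. a k = z}"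
      using R by (auto simp: K'_def)
    have "partial_prod K a R w = (\<Prod>k\<in>{k\<in>K'. cmod (a k) < R}. 1 - w / a k) * (\<Prod>k\<in>{k\<in>K. a k = z}. 1 - w / a k)"
      unfolding partial_prod_def e
      by (rule prod.union_disjoint) (use z'.fin_lt finZ in \<open>auto simp: K'_def\<close>)
    moreover have "(\<Prod>k\<in>{k\<in>K. a k = z}. 1 - w / a k) = (1 - w / z) ^ l"
      by (simp add: l_def)
    ultimately show "partial_prod K a R w = partial_prod K' a R w * (1 - w / z) ^ l"
      by (simp add: partial_prod_def)
  qed
  have g_id: "gfun w = z'.gfun w * (1 - w / z) ^ l" for w
  proof -
    have "((\<lambda>R. partial_prod K' a R w * (1 - w / z) ^ l) \<longlongrightarrow> z'.gfun w * (1 - w / z) ^ l) at_top"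
      by (intro tendsto_mult z'.g_tendsto tendsto_const)
    then have "((\<lambda>R. partial_prod K a R w) \<longlongrightarrow> z'.gfun w * (1 - w / z) ^ l) at_top"
      by (rule Lim_transform_eventually) (use prod_id[of w] in \<open>auto elim: eventually_mono\<close>)
    then show ?thesis using g_tendsto[of w] by (metis tendsto_unique trivial_limit_at_top_linorder)
  qed
  have g_eq: "gfun = (\<lambda>w. (w - z) ^ l * ((- 1 / z) ^ l * z'.gfun w))"
  proof
    fix w
    have e1: "1 - w / z = (w - z) * (- 1 / z)" using z0 by (simp add: field_simps)
    have e: "(1 - w / z) ^ l = (w - z) ^ l * (- 1 / z) ^ l"
      unfolding e1 by (rule power_mult_distrib)
    show "gfun w = (w - z) ^ l * ((- 1 / z) ^ l * z'.gfun w)"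
      unfolding g_id e by (simp only: mult_ac)
  qed
  have "(deriv ^^ l) gfun z = fact l * ((- 1 / z) ^ l * z'.gfun z)"
    unfolding g_eq by (rule hd_mult_pow) (intro holomorphic_intros z'.g_holo)
  then have dz: "(deriv ^^ l) gfun z / fact l = (- 1 / z) ^ l * z'.gfun z" by simp
  have gz: "z'.gfun z \<noteq> 0" by (rule z'.g_nonzero[OF zK'])
  have lnd: "ln (cmod ((deriv ^^ l) gfun z / fact l)) = \<Lambda> - real l * ln (cmod z)"
  proof -
    have "cmod ((deriv ^^ l) gfun z / fact l) = cmod (z'.gfun z) / cmod z ^ l"
      unfolding dz by (simp add: norm_mult norm_power norm_divide power_one_over)
    then show ?thesis using gz rz by (simp add: ln_divide_pos ln_realpow \<Lambda>_def)
  qed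
  define I1 where "I1 = \<Lambda> - integral {0..1} h - real l * ln (max 1 (cmod z)) + real l * ln 1"
  define I2 where "I2 = integral {0..1} h + (if cmod z \<le> 1 then real l * (ln 1 - ln (max 0 (cmod z))) else 0)"
  have I1: "(f has_integral I1) {1..}" unfolding I1_def by (rule key) simp
  have I2: "((\<lambda>t. (cnt K a 0 t - cnt K a z t + real l) / t) has_integral I2) {0..1}"
  proof -
    have H: "(h has_integral integral {0..1} h) {0..1}" using h_int by (simp add: integrable_integral)
    have P: "(p has_integral (if cmod z \<le> 1 then real l * (ln 1 - ln (max 0 (cmod z))) else 0)) {0..1}"
      using pint[of "cmod z" 0 1 "real l"] rz unfolding p_def[abs_def] by simp
    have "((\<lambda>t. h t + p t) has_integral I2) {0..1}" unfolding I2_def by (rule has_integral_add[OF H P])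
    then show ?thesis
    proof (rule has_integral_eq[rotated])
      fix t :: real assume "t \<in> {0..1}"
      then have t: "t \<ge> 0" by simp
      show "h t + p t = (cnt K a 0 t - cnt K a z t + real l) / t"
        using c0[of t] cz[OF t] by (auto simp: h_def p_def diff_divide_distrib add_divide_distrib)
    qed
  qed
  have sum: "ln (cmod ((deriv ^^ l) gfun z / fact l)) = I1 + I2"
    unfolding lnd I1_def I2_def using rz by (cases "cmod z \<le> 1") (auto simp: max_def)
  show "\<exists>I1 I2. ((\<lambda>t. (cnt K a 0 t - cnt K a z t) / t) has_integral I1) {1..}
         \<and> ((\<lambda>t. (cnt K a 0 t - cnt K a z t + real (card {k\<in>K. a k = z})) / t) has_integral I2) {0..1}
         \<and> ln (cmod ((deriv ^^ card {k\<in>K. a k = z}) gfun z / fact (card {k\<in>K. a k = z}))) = I1 + I2"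
    using I1 I2 sum unfolding f_def[abs_def] l_def by blast
qed

end

theorem lemma1:
  fixes K :: "nat set" and a :: "nat \<Rightarrow> complex"
  assumes nonzero: "\<And>k. k \<in> K \<Longrightarrow> a k \<noteq> 0"
    and no_limit_pts: "\<And>R. finite {k\<in>K. cmod (a k) \<le> R}"
    and sum_lim: "\<exists>L. ((\<lambda>R::real. \<Sum>k\<in>{k\<in>K. cmod (a k) < R}. 1 / a k) \<longlongrightarrow> L) at_top"
    and growth: "(\<lambda>t. cnt K a 0 t) \<in> O[at_top](\<lambda>t. t)"
    and incr: "(\<lambda>t. cnt K a 0 (t + 1) - cnt K a 0 t) \<in> o[at_top](\<lambda>t. t)"
  shows "\<exists>g::complex \<Rightarrow> complex.
     (\<forall>z. ((\<lambda>R. partial_prod K a R z) \<longlongrightarrow> g z) at_top)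
   \<and> g holomorphic_on UNIV
   \<and> (\<exists>A B. \<forall>z. cmod (g z) \<le> A * exp (B * cmod z))
   \<and> (\<forall>z. z \<notin> a ` K \<longrightarrow>
        ((\<lambda>t. (cnt K a 0 t - cnt K a z t) / t) has_integral ln (cmod (g z))) {0..})
   \<and> (\<forall>z. z \<in> a ` K \<longrightarrow>
        g z = 0
        \<and> (\<forall>\<epsilon>>0. (\<lambda>t. (cnt K a 0 t - cnt K a z t) / t) integrable_on {\<epsilon>..})
        \<and> filterlim (\<lambda>\<epsilon>. integral {\<epsilon>..} (\<lambda>t. (cnt K a 0 t - cnt K a z t) / t))
                    at_bot (at_right 0))
   \<and> (\<forall>z0 (l::nat). real l = cnt K a z0 0 \<longrightarrow> l > 0 \<longrightarrow>
        (\<exists>I1 I2.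
           ((\<lambda>t. (cnt K a 0 t - cnt K a z0 t) / t) has_integral I1) {1..}
         \<and> ((\<lambda>t. (cnt K a 0 t - cnt K a z0 t + real l) / t) has_integral I2) {0..1}
         \<and> ln (cmod ((deriv ^^ l) g z0 / fact l)) = I1 + I2))"
proof -
  obtain C where C: "C \<ge> 0" "\<And>t. t \<ge> 0 \<Longrightarrow> cnt K a 0 t \<le> C * t"
    using cnt_linear_bound[OF no_limit_pts nonzero growth] by blast
  obtain L where L: "((\<lambda>R::real. \<Sum>k\<in>{k\<in>K. cmod (a k) < R}. 1 / a k) \<longlongrightarrow> L) at_top"
    using sum_lim by blast
  interpret zset K a C L
    by unfold_locales (use nonzero no_limit_pts L C in auto)
  have window: "\<And>r \<epsilon>. r \<ge> 0 \<Longrightarrow> \<epsilon> > 0 \<Longrightarrow> eventually (\<lambda>T. cnt K a 0 (T + r) - cnt K a 0 (T - r) \<le> \<epsilon> * T) at_top"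
    by (rule window_small[OF no_limit_pts incr])
  have c4: "((\<lambda>t. (cnt K a 0 t - cnt K a z t) / t) has_integral ln (cmod (gfun z))) {0..}"
    if z: "z \<notin> a ` K" for z
  proof (rule has_integral_Ici_lim)
    show "\<And>T. 0 \<le> T \<Longrightarrow> (\<lambda>t. (cnt K a 0 t - cnt K a z t) / t) integrable_on {0..T}"
      using logA(1)[OF z window] by blast
    show "((\<lambda>T. integral {0..T} (\<lambda>t. (cnt K a 0 t - cnt K a z t) / t)) \<longlongrightarrow> ln (cmod (gfun z))) at_top"
      by (rule logA(2)[OF z window])
  qed
  have c6: "\<exists>I1 I2.
           ((\<lambda>t. (cnt K a 0 t - cnt K a z0 t) / t) has_integral I1) {1..}
         \<and> ((\<lambda>t. (cnt K a 0 t - cnt K a z0 t + real l) / t) has_integral I2) {0..1}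
         \<and> ln (cmod ((deriv ^^ l) gfun z0 / fact l)) = I1 + I2"
    if l: "real l = cnt K a z0 0" "l > 0" for z0 l
  proof -
    have e: "{k\<in>K. cmod (a k - z0) \<le> 0} = {k\<in>K. a k = z0}" by auto
    have lc: "l = card {k\<in>K. a k = z0}" using l(1) unfolding cnt_def e by simp
    then have "card {k\<in>K. a k = z0} \<noteq> 0" using l(2) by simp
    then have "{k\<in>K. a k = z0} \<noteq> {}" by (metis card.empty)
    then have "z0 \<in> a ` K" by auto
    from zero_point(3)[OF window this] show ?thesis unfolding lc[symmetric] .
  qed
  show ?thesis
  proof (intro exI[of _ gfun] conjI allI impI)
    show "\<And>z. ((\<lambda>R. partial_prod K a R z) \<longlongrightarrow> gfun z) at_top" by (rule g_tendsto)
    show "gfun holomorphic_on UNIV" by (rule g_holo)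
    show "\<exists>A B. \<forall>z. cmod (gfun z) \<le> A * exp (B * cmod z)" by (rule g_exp_bound)
    show "\<And>z. z \<notin> a ` K \<Longrightarrow> ((\<lambda>t. (cnt K a 0 t - cnt K a z t) / t) has_integral ln (cmod (gfun z))) {0..}"
      by (rule c4)
    show "\<And>z. z \<in> a ` K \<Longrightarrow> gfun z = 0" by (rule g_zero)
    show "\<And>z \<epsilon>. z \<in> a ` K \<Longrightarrow> \<epsilon> > 0 \<Longrightarrow> (\<lambda>t. (cnt K a 0 t - cnt K a z t) / t) integrable_on {\<epsilon>..}"
      using zero_point(1)[OF window] by blast
    show "\<And>z. z \<in> a ` K \<Longrightarrow> filterlim (\<lambda>\<epsilon>. integral {\<epsilon>..} (\<lambda>t. (cnt K a 0 t - cnt K a z t) / t)) at_bot (at_right 0)"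
      by (rule zero_point(2)[OF window])
    show "\<And>z0 l. real l = cnt K a z0 0 \<Longrightarrow> 0 < l \<Longrightarrow> \<exists>I1 I2.
           ((\<lambda>t. (cnt K a 0 t - cnt K a z0 t) / t) has_integral I1) {1..}
         \<and> ((\<lambda>t. (cnt K a 0 t - cnt K a z0 t + real l) / t) has_integral I2) {0..1}
         \<and> ln (cmod ((deriv ^^ l) gfun z0 / fact l)) = I1 + I2"
      by (rule c6)
  qed
qed


end
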